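(* Let $\overrightarrow{W}$ be a Morse sequence on a simplicial complex $K$. Then $\overline\Phi_p=\widetilde\curlywedge_p\circ\curlywedge_p$ and $\underline\Phi_p=\widetilde\curlyvee_p\circ\curlyvee_p$ as maps $K[p]\to K[p]$, for every $p$.
   Context: A simplicial complex $K$ is a finite collection of non-empty finite sets closed under taking non-empty subsets; $\dim\sigma=|\sigma|-1$, $K^{(p)}$ the set of $p$-simplices. A pair $(\sigma,\tau)$ with $\sigma\subsetneq\tau$ is a free pair for $K$ if $\tau$ is the only simplex other than $\sigma$ containing $\sigma$; $K$ is then an elementary expansion of $K\setminus\{\sigma,\tau\}$. If $\nu$ is a facet (maximal simplex) of $K$, $K$ is an elementary filling of $K\setminus\{\nu\}$. A Morse sequence on $K$ is a sequence $\langle\emptyset=K_0,\dots,K_k=K\rangle$ with each $K_i$ an elementary expansion or filling of $K_{i-1}$; simplices added by fillings are critical; for an expansion $K_i=K_{i-1}\cup\{\sigma,\tau\}$, $\sigma\subset\tau$, $(\sigma,\tau)$ is a regular pair, $\sigma$ lower regular, $\tau$ upper regular. $\widehat W$ is the set of critical simplices. $K[p]$ is the $\mathbb{Z}_2$-vector space of subsets of $K^{(p)}$ (sum = symmetric difference, $0=\emptyset$), $\widehat W[p]=\{c\in K[p]:c\subseteq\widehat W\}$. For $\sigma\in K^{(p)}$, $\partial(\sigma)=\{\tau\in K^{(p-1)}:\tau\subset\sigma\}$, $\delta(\sigma)=\{\tau\in K^{(p+1)}:\sigma\subset\tau\}$, with linear extensions $\partial_p,\delta_p$. The reference map $\curlywedge$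 is the unique map assigning to each $p$-simplex an element of $\widehat W[p]$, with linear extension $\curlywedge_p$, such that $\curlywedge(\nu)=\{\nu\}$ for critical $\nu$ and $\curlywedge(\tau)=0=\curlywedge(\partial(\tau))$ for upper regular $\tau$; the coreference map $\curlyvee$ (linear extension $\curlyvee_p$) is the unique such map with $\curlyvee(\nu)=\{\nu\}$ for critical $\nu$ and $\curlyvee(\sigma)=0=\curlyvee(\delta(\sigma))$ for lower regular $\sigma$. Extension maps: $\widetilde\curlywedge_p,\widetilde\curlyvee_p:\widehat W[p]\to K[p]$ linear with $\widetilde\curlywedge(\kappa)=\{\nu\in K:\kappa\in\curlyvee(\nu)\}$, $\widetilde\curlyvee(\kappa)=\{\nu\in K:\kappa\in\curlywedge(\nu)\}$ for critical $\kappa$. Let $V_p:K[p]\to K[p+1]$ and $V^*_p:K[p]\to K[p-1]$ be the linear maps with $V(\kappa)=V^*(\kappa)=0$ for critical $\kappa$, and $V(\sigma)=\tau$, $V(\tau)=0$, $V^*(\sigma)=0$, $V^*(\tau)=\sigma$ for each regular pair $(\sigma,\tau)$. The gradient flow $\Phi_p:K[p]\to K[p]$ and coflow $\Phi^*_p:K[p]\to K[p]$ are the linear maps with $\Phi_p(\nu)=\nu+\partial_{p+1}(V_p(\nu))+V_{p-1}(\partial_p(\nu))$ and $\Phi^*_p(\nu)=\nu+\delta_{p-1}(V^*_p(\nu))+V^*_{p+1}(\delta_p(\nu))$ for $\nu\in K^{(p)}$. For each $c\in K[p]$ there are integers $i,j\ge0$ with $\Phi^{i+1}(c)=\Phi^i(c)$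 and $(\Phi^* )^{j+1}(c)=(\Phi^* )^j(c)$; one sets $\overline\Phi_p(c)=\Phi^i(c)$ and $\underline\Phi_p(c)=(\Phi^* )^j(c)$. *)

theory Defs
  imports Main
begin

text \<open>Simplices are finite non-empty vertex sets; a complex is a set of simplices.
  Chains over Z_2 (elements of K[p]) are finite sets of simplices; the sum is
  symmetric difference.\<close>

definition simplicial_complex :: "'v set set \<Rightarrow> bool" where
  "simplicial_complex K \<longleftrightarrow> finite K \<and> (\<forall>\<sigma>\<in>K. \<sigma> \<noteq> {} \<and> finite \<sigma>) \<and>
     (\<forall>\<sigma>\<in>K. \<forall>\<tau>. \<tau> \<noteq> {} \<and> \<tau> \<subseteq> \<sigma> \<longrightarrow> \<tau> \<in> K)"

definition simplices_dim :: "'v set set \<Rightarrow> nat \<Rightarrow> 'v set set" where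
  "simplices_dim K p = {\<sigma>\<in>K. card \<sigma> = Suc p}"

definition free_pair :: "'v set set \<Rightarrow> 'v set \<Rightarrow> 'v set \<Rightarrow> bool" where
  "free_pair K \<sigma> \<tau> \<longleftrightarrow> \<sigma> \<subset> \<tau> \<and> \<sigma> \<in> K \<and> \<tau> \<in> K \<and>
     (\<forall>\<rho>\<in>K. \<sigma> \<subseteq> \<rho> \<longrightarrow> \<rho> = \<sigma> \<or> \<rho> = \<tau>)"

definition facet :: "'v set set \<Rightarrow> 'v set \<Rightarrow> bool" where
  "facet K \<nu> \<longleftrightarrow> \<nu> \<in> K \<and> (\<forall>\<rho>\<in>K. \<nu> \<subseteq> \<rho> \<longrightarrow> \<rho> = \<nu>)"

text \<open>A step of a Morse sequence: an elementary filling adding a critical simplex,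
  or an elementary expansion adding a regular pair (sigma, tau).\<close>
datatype 'v step = Fill "'v set" | Expand "'v set" "'v set"

fun added :: "'v step \<Rightarrow> 'v set set" where
  "added (Fill \<nu>) = {\<nu>}"
| "added (Expand \<sigma> \<tau>) = {\<sigma>, \<tau>}"

definition prefix_complex :: "'v step list \<Rightarrow> nat \<Rightarrow> 'v set set" where
  "prefix_complex W i = \<Union> (added ` set (take i W))"

definition morse_sequence :: "'v set set \<Rightarrow> 'v step list \<Rightarrow> bool" where
  "morse_sequence K W \<longleftrightarrow>
     (\<forall>i\<le>length W. simplicial_complex (prefix_complex W i)) \<and>
     prefix_complex W (length W) = K \<and>
     (\<forall>i<length W. (case W ! i of
        Fill \<nu> \<Rightarrow> \<nu> \<notin> prefix_complex W i \<and> facet (prefix_complex W (Suc i)) \<nu>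
      | Expand \<sigma> \<tau> \<Rightarrow> \<sigma> \<notin> prefix_complex W i \<and> \<tau> \<notin> prefix_complex W i \<and>
                        free_pair (prefix_complex W (Suc i)) \<sigma> \<tau>))"

definition critical :: "'v step list \<Rightarrow> 'v set set" where
  "critical W = {\<nu>. Fill \<nu> \<in> set W}"

definition lower_regular :: "'v step list \<Rightarrow> 'v set set" where
  "lower_regular W = {\<sigma>. \<exists>\<tau>. Expand \<sigma> \<tau> \<in> set W}"

definition upper_regular :: "'v step list \<Rightarrow> 'v set set" where
  "upper_regular W = {\<tau>. \<exists>\<sigma>. Expand \<sigma> \<tau> \<in> set W}"

text \<open>Z_2-linear extension of a map on simplices to chains (finite sets of simplices).\<close>
definition lin :: "('v set \<Rightarrow> 'v set set) \<Rightarrow> 'v set set \<Rightarrow> 'v set set" where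
  "lin f c = {x. odd (card {\<nu>\<in>c. x \<in> f \<nu>})}"

definition sdiff :: "'a set \<Rightarrow> 'a set \<Rightarrow> 'a set" where
  "sdiff A B = (A - B) \<union> (B - A)"

definition bd :: "'v set set \<Rightarrow> 'v set \<Rightarrow> 'v set set" where
  "bd K \<sigma> = {\<tau>\<in>K. \<tau> \<subset> \<sigma> \<and> card \<tau> + 1 = card \<sigma>}"

definition cobd :: "'v set set \<Rightarrow> 'v set \<Rightarrow> 'v set set" where
  "cobd K \<sigma> = {\<tau>\<in>K. \<sigma> \<subset> \<tau> \<and> card \<tau> = card \<sigma> + 1}"

definition is_reference_map :: "'v set set \<Rightarrow> 'v step list \<Rightarrow> ('v set \<Rightarrow> 'v set set) \<Rightarrow> bool" where
  "is_reference_map K W f \<longleftrightarrow>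
     (\<forall>\<nu>. \<nu> \<notin> K \<longrightarrow> f \<nu> = {}) \<and>
     (\<forall>\<nu>\<in>K. f \<nu> \<subseteq> critical W \<inter> simplices_dim K (card \<nu> - 1)) \<and>
     (\<forall>\<nu>\<in>critical W. f \<nu> = {\<nu>}) \<and>
     (\<forall>\<tau>\<in>upper_regular W. f \<tau> = {} \<and> lin f (bd K \<tau>) = {})"

definition is_coreference_map :: "'v set set \<Rightarrow> 'v step list \<Rightarrow> ('v set \<Rightarrow> 'v set set) \<Rightarrow> bool" where
  "is_coreference_map K W f \<longleftrightarrow>
     (\<forall>\<nu>. \<nu> \<notin> K \<longrightarrow> f \<nu> = {}) \<and>
     (\<forall>\<nu>\<in>K. f \<nu> \<subseteq> critical W \<inter> simplices_dim K (card \<nu> - 1)) \<and>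
     (\<forall>\<nu>\<in>critical W. f \<nu> = {\<nu>}) \<and>
     (\<forall>\<sigma>\<in>lower_regular W. f \<sigma> = {} \<and> lin f (cobd K \<sigma>) = {})"

definition reference_map :: "'v set set \<Rightarrow> 'v step list \<Rightarrow> 'v set \<Rightarrow> 'v set set" where
  "reference_map K W = (THE f. is_reference_map K W f)"

definition coreference_map :: "'v set set \<Rightarrow> 'v step list \<Rightarrow> 'v set \<Rightarrow> 'v set set" where
  "coreference_map K W = (THE f. is_coreference_map K W f)"

definition ext_reference :: "'v set set \<Rightarrow> 'v step list \<Rightarrow> 'v set \<Rightarrow> 'v set set" where
  "ext_reference K W \<kappa> = {\<nu>\<in>K. \<kappa> \<in> coreference_map K W \<nu>}"

definition ext_coreference :: "'v set set \<Rightarrow> 'v step list \<Rightarrow> 'v set \<Rightarrow> 'v set set" where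
  "ext_coreference K W \<kappa> = {\<nu>\<in>K. \<kappa> \<in> reference_map K W \<nu>}"

definition Vmap :: "'v step list \<Rightarrow> 'v set \<Rightarrow> 'v set set" where
  "Vmap W \<sigma> = {\<tau>. Expand \<sigma> \<tau> \<in> set W}"

definition Vstar :: "'v step list \<Rightarrow> 'v set \<Rightarrow> 'v set set" where
  "Vstar W \<tau> = {\<sigma>. Expand \<sigma> \<tau> \<in> set W}"

definition flow :: "'v set set \<Rightarrow> 'v step list \<Rightarrow> 'v set set \<Rightarrow> 'v set set" where
  "flow K W = lin (\<lambda>\<nu>. sdiff (sdiff {\<nu>} (lin (bd K) (Vmap W \<nu>))) (lin (Vmap W) (bd K \<nu>)))"

definition coflow :: "'v set set \<Rightarrow> 'v step list \<Rightarrow> 'v set set \<Rightarrow> 'v set set" where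
  "coflow K W = lin (\<lambda>\<nu>. sdiff (sdiff {\<nu>} (lin (cobd K) (Vstar W \<nu>))) (lin (Vstar W) (cobd K \<nu>)))"

definition flow_bar :: "'v set set \<Rightarrow> 'v step list \<Rightarrow> 'v set set \<Rightarrow> 'v set set" where
  "flow_bar K W c = (flow K W ^^ (LEAST i. (flow K W ^^ Suc i) c = (flow K W ^^ i) c)) c"

definition coflow_bar :: "'v set set \<Rightarrow> 'v step list \<Rightarrow> 'v set set \<Rightarrow> 'v set set" where
  "coflow_bar K W c = (coflow K W ^^ (LEAST j. (coflow K W ^^ Suc j) c = (coflow K W ^^ j) c)) c"

end

theory Submission
  imports Defs
begin

lemma sdiff_simps[simp]: "sdiff A {} = A" "sdiff {} A = A" "sdiff A A = {}"
  by (auto simp: sdiff_def)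

lemma sdiff_eq_empty: "sdiff A B = {} \<longleftrightarrow> A = B"
  by (auto simp: sdiff_def)

lemma finite_sdiff[simp]: "finite A \<Longrightarrow> finite B \<Longrightarrow> finite (sdiff A B)"
  by (auto simp: sdiff_def)

lemma lin_mem: "x \<in> lin f c \<longleftrightarrow> odd (card {\<mu>\<in>c. x \<in> f \<mu>})"
  by (simp add: lin_def)

lemma lin_empty[simp]: "lin f {} = {}"
  by (simp add: lin_def)

lemma lin_single[simp]: "lin f {\<nu>} = f \<nu>"
proof -
  have "\<And>x. {\<mu>\<in>{\<nu>}. x \<in> f \<mu>} = (if x \<in> f \<nu> then {\<nu>} else {})" by auto
  then show ?thesis by (auto simp: lin_def)
qed

lemma lin_insert:
  assumes "finite c" "\<nu> \<notin> c"
  shows "lin f (insert \<nu> c) = sdiff (f \<nu>) (lin f c)"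
proof -
  have "\<And>x. {\<mu>\<in>insert \<nu> c. x \<in> f \<mu>} = (if x \<in> f \<nu> then insert \<nu> {\<mu>\<in>c. x \<in> f \<mu>} else {\<mu>\<in>c. x \<in> f \<mu>})"
    by auto
  then show ?thesis using assms by (auto simp: lin_def sdiff_def)
qed

lemma card_sdiff_parity:
  assumes "finite A" "finite B"
  shows "odd (card (sdiff A B)) \<longleftrightarrow> (odd (card A) \<noteq> odd (card B))"
proof -
  have e: "sdiff A B = (A \<union> B) - (A \<inter> B)" by (auto simp: sdiff_def)
  have "card (sdiff A B) = card (A \<union> B) - card (A \<inter> B)"
    unfolding e using assms by (intro card_Diff_subset) auto
  moreover have "card (A \<union> B) + card (A \<inter> B) = card A + card B"
    using card_Un_Int[OF assms] by simp
  moreover have "card (A \<inter> B) \<le> card (A \<union> B)" using assms by (intro card_mono) auto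
  ultimately have "card (sdiff A B) + 2 * card (A \<inter> B) = card A + card B" by simp
  then show ?thesis by presburger
qed

lemma lin_sdiff:
  assumes "finite a" "finite b"
  shows "lin f (sdiff a b) = sdiff (lin f a) (lin f b)"
proof (rule set_eqI)
  fix x
  have e: "{\<mu>\<in>sdiff a b. x \<in> f \<mu>} = sdiff {\<mu>\<in>a. x \<in> f \<mu>} {\<mu>\<in>b. x \<in> f \<mu>}"
    by (auto simp: sdiff_def)
  have "odd (card {\<mu>\<in>sdiff a b. x \<in> f \<mu>}) \<longleftrightarrow> (odd (card {\<mu>\<in>a. x \<in> f \<mu>}) \<noteq> odd (card {\<mu>\<in>b. x \<in> f \<mu>}))"
    unfolding e by (rule card_sdiff_parity) (use assms in auto)
  then show "x \<in> lin f (sdiff a b) \<longleftrightarrow> x \<in> sdiff (lin f a) (lin f b)"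
    unfolding lin_def sdiff_def by blast
qed

lemma lin_cong: "(\<And>x. x \<in> c \<Longrightarrow> f x = g x) \<Longrightarrow> lin f c = lin g c"
  unfolding lin_def by (simp cong: conj_cong)

lemma lin_zero: "(\<And>x. x \<in> c \<Longrightarrow> f x = {}) \<Longrightarrow> lin f c = {}"
proof -
  assume a: "\<And>x. x \<in> c \<Longrightarrow> f x = {}"
  have e: "\<And>y. {\<nu>\<in>c. y \<in> f \<nu>} = {}" using a by auto
  show ?thesis unfolding lin_def e by simp
qed

lemma lin_subset: "lin f c \<subseteq> \<Union> (f ` c)"
proof
  fix x assume "x \<in> lin f c"
  then have "odd (card {\<mu>\<in>c. x \<in> f \<mu>})" unfolding lin_def by simp
  then have "{\<mu>\<in>c. x \<in> f \<mu>} \<noteq> {}" by (metis card.empty even_zero)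
  then obtain \<mu> where "\<mu> \<in> c" "x \<in> f \<mu>" by blast
  then show "x \<in> \<Union> (f ` c)" by auto
qed

lemma finite_lin: "finite c \<Longrightarrow> (\<And>\<nu>. \<nu> \<in> c \<Longrightarrow> finite (f \<nu>)) \<Longrightarrow> finite (lin f c)"
  by (meson finite_UN_I finite_subset lin_subset)

lemma lin_pointwise:
  assumes "finite c"
  shows "lin (\<lambda>\<nu>. sdiff (f \<nu>) (g \<nu>)) c = sdiff (lin f c) (lin g c)"
  using assms
proof (induction c rule: finite_induct)
  case empty then show ?case by simp
next
  case (insert x F)
  then show ?case by (simp add: lin_insert) (auto simp: sdiff_def)
qed

lemma lin_id: "finite c \<Longrightarrow> lin (\<lambda>\<nu>. {\<nu>}) c = c"
proof (induction c rule: finite_induct)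
  case empty then show ?case by simp
next
  case (insert x F)
  then show ?case by (simp add: lin_insert) (auto simp: sdiff_def)
qed

lemma lin_comp:
  assumes "finite c" "\<And>\<nu>. \<nu> \<in> c \<Longrightarrow> finite (g \<nu>)"
  shows "lin f (lin g c) = lin (\<lambda>\<nu>. lin f (g \<nu>)) c"
  using assms
proof (induction c rule: finite_induct)
  case empty then show ?case by simp
next
  case (insert x F)
  have fl: "finite (lin g F)" using insert by (intro finite_lin) auto
  have "lin f (lin g (insert x F)) = lin f (sdiff (g x) (lin g F))"
    using insert by (simp add: lin_insert)
  also have "\<dots> = sdiff (lin f (g x)) (lin f (lin g F))"
    using insert fl by (simp add: lin_sdiff)
  finally show ?case using insert by (simp add: lin_insert)
qed

lemma lin_inj:
  assumes "\<And>a b x. a \<in> c \<Longrightarrow> b \<in> c \<Longrightarrow> x \<in> f a \<Longrightarrow> x \<in> f b \<Longrightarrow> a = b"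
  shows "lin f c = \<Union> (f ` c)"
proof (rule set_eqI)
  fix x
  show "x \<in> lin f c \<longleftrightarrow> x \<in> \<Union> (f ` c)"
  proof (cases "x \<in> \<Union> (f ` c)")
    case True
    then obtain a where a: "a \<in> c" "x \<in> f a" by blast
    then have e: "{\<mu>\<in>c. x \<in> f \<mu>} = {a}" using assms by blast
    show ?thesis using True by (simp only: lin_mem e) simp
  next
    case False
    then have e: "{\<mu>\<in>c. x \<in> f \<mu>} = {}" by blast
    show ?thesis using False by (simp only: lin_mem e) simp
  qed
qed

lemma lin_remove:
  assumes "finite c" "\<nu> \<in> c"
  shows "lin f c = sdiff (f \<nu>) (lin f (c - {\<nu>}))"
proof -
  have "lin f (insert \<nu> (c - {\<nu>})) = sdiff (f \<nu>) (lin f (c - {\<nu>}))"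
    by (rule lin_insert) (use assms in auto)
  moreover have "insert \<nu> (c - {\<nu>}) = c" using assms by blast
  ultimately show ?thesis by simp
qed

definition isref :: "'v set set \<Rightarrow> 'v set set \<Rightarrow> 'v set set \<Rightarrow> ('v set \<Rightarrow> 'v set set) \<Rightarrow> ('v set \<Rightarrow> nat) \<Rightarrow> ('v set \<Rightarrow> 'v set set) \<Rightarrow> bool" where
  "isref C cr up d dm f \<longleftrightarrow> (\<forall>\<nu>. \<nu> \<notin> C \<longrightarrow> f \<nu> = {}) \<and>
     (\<forall>\<nu>\<in>C. f \<nu> \<subseteq> cr \<inter> {x\<in>C. dm x = dm \<nu>}) \<and>
     (\<forall>\<nu>\<in>cr. f \<nu> = {\<nu>}) \<and> (\<forall>\<tau>\<in>up. f \<tau> = {} \<and> lin f (d \<tau>) = {})"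

definition gflow :: "('v set \<Rightarrow> 'v set set) \<Rightarrow> ('v set \<Rightarrow> 'v set set) \<Rightarrow> 'v set set \<Rightarrow> 'v set set" where
  "gflow d V = lin (\<lambda>\<nu>. sdiff (sdiff {\<nu>} (lin d (V \<nu>))) (lin V (d \<nu>)))"

locale mg =
  fixes C :: "'v set set" and cr lo up :: "'v set set" and d d' V :: "'v set \<Rightarrow> 'v set set"
    and t dm :: "'v set \<Rightarrow> nat" and N :: nat
  assumes finC: "finite C"
  and cover: "cr \<union> lo \<union> up = C"
  and dj1: "cr \<inter> lo = {}" and dj2: "cr \<inter> up = {}" and dj3: "lo \<inter> up = {}"
  and dC: "\<And>\<nu>. d \<nu> \<subseteq> C" and d'C: "\<And>\<nu>. d' \<nu> \<subseteq> C"
  and tr: "\<And>\<nu> \<sigma>. \<nu> \<in> C \<Longrightarrow> \<sigma> \<in> C \<Longrightarrow> \<sigma> \<in> d \<nu> \<longleftrightarrow> \<nu> \<in> d' \<sigma>"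
  and Vnl: "\<And>\<nu>. \<nu> \<notin> lo \<Longrightarrow> V \<nu> = {}"
  and Vlo: "\<And>\<sigma>. \<sigma> \<in> lo \<Longrightarrow> \<exists>\<tau>. V \<sigma> = {\<tau>} \<and> \<tau> \<in> up \<and> \<sigma> \<in> d \<tau>"
  and Vinj: "\<And>a b x. x \<in> V a \<Longrightarrow> x \<in> V b \<Longrightarrow> a = b"
  and Vsur: "\<And>\<tau>. \<tau> \<in> up \<Longrightarrow> \<exists>\<sigma>. \<tau> \<in> V \<sigma>"
  and tlt: "\<And>\<nu> \<rho>. \<nu> \<in> C \<Longrightarrow> \<rho> \<in> d \<nu> \<Longrightarrow> t \<rho> < t \<nu> \<or> \<nu> \<in> V \<rho>"
  and teq: "\<And>\<sigma> x. x \<in> V \<sigma> \<Longrightarrow> t x = t \<sigma>"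
  and tN: "\<And>\<nu>. \<nu> \<in> C \<Longrightarrow> t \<nu> < N"
  and dmd: "\<And>\<nu> \<rho> \<rho>'. \<rho> \<in> d \<nu> \<Longrightarrow> \<rho>' \<in> d \<nu> \<Longrightarrow> dm \<rho> = dm \<rho>'"
  and dmd': "\<And>\<nu> \<rho> \<rho>'. \<rho> \<in> d' \<nu> \<Longrightarrow> \<rho>' \<in> d' \<nu> \<Longrightarrow> dm \<rho> = dm \<rho>'"
begin

lemma crC: "cr \<subseteq> C" and loC: "lo \<subseteq> C" and upC: "up \<subseteq> C"
  using cover by auto

lemma Vup: "V \<nu> \<subseteq> up"
  using Vnl Vlo by (cases "\<nu> \<in> lo") (force, simp)

lemma VC: "V \<nu> \<subseteq> C" using Vup upC by blast

lemma fin_d[simp]: "finite (d \<nu>)" using dC finC finite_subset by blast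
lemma fin_d'[simp]: "finite (d' \<nu>)" using d'C finC finite_subset by blast
lemma fin_V[simp]: "finite (V \<nu>)" using VC finC finite_subset by blast

lemma lo_of_V: "x \<in> V \<sigma> \<Longrightarrow> \<sigma> \<in> lo" using Vnl by blast

subsection \<open>Reference map\<close>

definition Fr :: "('v set \<Rightarrow> 'v set set) \<Rightarrow> 'v set \<Rightarrow> 'v set set" where
  "Fr g \<nu> = (if \<nu> \<in> cr then {\<nu>} else if \<nu> \<in> lo then lin g (\<Union>\<tau>\<in>V \<nu>. d \<tau> - {\<nu>}) else {})"

lemma Fr_out: "\<nu> \<notin> C \<Longrightarrow> Fr g \<nu> = {}"
  using crC loC by (auto simp: Fr_def)

lemma partner_earlier:
  assumes "\<nu> \<in> lo" "V \<nu> = {\<tau>}" "\<rho> \<in> d \<tau>" "\<rho> \<noteq> \<nu>"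
  shows "t \<rho> < t \<nu>"
proof -
  have "\<tau> \<in> C" using assms VC by blast
  have "t \<tau> = t \<nu>" using teq assms by auto
  moreover have "\<not> \<tau> \<in> V \<rho>" using Vinj assms by blast
  ultimately show ?thesis using tlt[OF \<open>\<tau> \<in> C\<close> assms(3)] by simp
qed

lemma Fr_agree:
  assumes "\<And>\<mu>. \<mu> \<in> C \<Longrightarrow> t \<mu> < k \<Longrightarrow> g \<mu> = h \<mu>" "\<nu> \<in> C" "t \<nu> < Suc k"
  shows "Fr g \<nu> = Fr h \<nu>"
proof (cases "\<nu> \<in> lo \<and> \<nu> \<notin> cr")
  case True
  then obtain \<tau> where \<tau>: "V \<nu> = {\<tau>}" using Vlo by blast
  have "lin g (d \<tau> - {\<nu>}) = lin h (d \<tau> - {\<nu>})"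
  proof (rule lin_cong)
    fix \<rho> assume "\<rho> \<in> d \<tau> - {\<nu>}"
    then have "t \<rho> < t \<nu>" "\<rho> \<in> C" using partner_earlier[of \<nu> \<tau> \<rho>] True \<tau> dC by auto
    then show "g \<rho> = h \<rho>" using assms by auto
  qed
  then show ?thesis using True \<tau> by (simp add: Fr_def)
next
  case False
  then show ?thesis by (auto simp: Fr_def)
qed

lemma Fr_iter: "\<nu> \<in> C \<Longrightarrow> t \<nu> < n \<Longrightarrow> (Fr ^^ n) g \<nu> = (Fr ^^ n) h \<nu>"
proof (induction n arbitrary: \<nu>)
  case 0 then show ?case by simp
next
  case (Suc n)
  show ?case using Fr_agree[of n "(Fr ^^ n) g" "(Fr ^^ n) h" \<nu>] Suc by simp
qed

lemma Fr_fix_unique: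
  assumes "Fr f = f" "Fr g = g"
  shows "f = g"
proof
  fix \<nu>
  have pf: "(Fr ^^ n) f = f" for n by (induction n) (use assms in auto)
  have pg: "(Fr ^^ n) g = g" for n by (induction n) (use assms in auto)
  show "f \<nu> = g \<nu>"
  proof (cases "\<nu> \<in> C")
    case True
    then show ?thesis using Fr_iter[OF True tN[OF True], of f g] pf pg by simp
  next
    case False
    then show ?thesis using Fr_out[OF False, of f] Fr_out[OF False, of g] assms by metis
  qed
qed

definition Q :: "('v set \<Rightarrow> 'v set set) \<Rightarrow> bool" where
  "Q g \<longleftrightarrow> (\<forall>\<nu>\<in>C. g \<nu> \<subseteq> cr \<inter> {x\<in>C. dm x = dm \<nu>})"

lemma Q_Fr: "Q g \<Longrightarrow> Q (Fr g)"
  unfolding Q_def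
proof (intro ballI)
  fix \<nu> assume q: "\<forall>\<nu>\<in>C. g \<nu> \<subseteq> cr \<inter> {x \<in> C. dm x = dm \<nu>}" and "\<nu> \<in> C"
  show "Fr g \<nu> \<subseteq> cr \<inter> {x \<in> C. dm x = dm \<nu>}"
  proof (cases "\<nu> \<in> lo \<and> \<nu> \<notin> cr")
    case True
    then obtain \<tau> where \<tau>: "V \<nu> = {\<tau>}" "\<nu> \<in> d \<tau>" using Vlo by blast
    have "Fr g \<nu> = lin g (d \<tau> - {\<nu>})" using True \<tau> by (simp add: Fr_def)
    also have "\<dots> \<subseteq> \<Union> (g ` (d \<tau> - {\<nu>}))" by (rule lin_subset)
    also have "\<dots> \<subseteq> cr \<inter> {x \<in> C. dm x = dm \<nu>}"
    proof (rule UN_least)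
      fix \<rho> assume "\<rho> \<in> d \<tau> - {\<nu>}"
      then have "\<rho> \<in> C" "dm \<rho> = dm \<nu>" using dC dmd[of \<rho> \<tau> \<nu>] \<tau> by auto
      moreover have "g \<rho> \<subseteq> cr \<inter> {x \<in> C. dm x = dm \<rho>}" using bspec[OF q \<open>\<rho> \<in> C\<close>] .
      ultimately show "g \<rho> \<subseteq> cr \<inter> {x \<in> C. dm x = dm \<nu>}" by simp
    qed
    finally show ?thesis .
  next
    case False
    then show ?thesis using crC \<open>\<nu> \<in> C\<close> by (auto simp: Fr_def)
  qed
qed

lemma isrefD:
  assumes "isref C' cr' up' d0 dm' f"
  shows isrefD1: "\<nu> \<notin> C' \<Longrightarrow> f \<nu> = {}"
    and isrefD2: "\<nu> \<in> C' \<Longrightarrow> f \<nu> \<subseteq> cr' \<inter> {x\<in>C'. dm' x = dm' \<nu>}"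
    and isrefD3: "\<nu> \<in> cr' \<Longrightarrow> f \<nu> = {\<nu>}"
    and isrefD4: "\<nu> \<in> up' \<Longrightarrow> f \<nu> = {}"
    and isrefD5: "\<nu> \<in> up' \<Longrightarrow> lin f (d0 \<nu>) = {}"
proof -
  have a: "(\<forall>\<nu>. \<nu> \<notin> C' \<longrightarrow> f \<nu> = {}) \<and>
     (\<forall>\<nu>\<in>C'. f \<nu> \<subseteq> cr' \<inter> {x\<in>C'. dm' x = dm' \<nu>}) \<and>
     (\<forall>\<nu>\<in>cr'. f \<nu> = {\<nu>}) \<and> (\<forall>\<tau>\<in>up'. f \<tau> = {} \<and> lin f (d0 \<tau>) = {})"
    using assms unfolding isref_def .
  show "\<nu> \<notin> C' \<Longrightarrow> f \<nu> = {}" using a by simp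
  show "\<nu> \<in> C' \<Longrightarrow> f \<nu> \<subseteq> cr' \<inter> {x\<in>C'. dm' x = dm' \<nu>}" using a by simp
  show "\<nu> \<in> cr' \<Longrightarrow> f \<nu> = {\<nu>}" using a by simp
  show "\<nu> \<in> up' \<Longrightarrow> f \<nu> = {}" using a by simp
  show "\<nu> \<in> up' \<Longrightarrow> lin f (d0 \<nu>) = {}" using a by simp
qed


lemma isref_Fr:
  assumes r: "isref C cr up d dm f"
  shows "Fr f = f"
proof (rule ext)
  fix \<nu>
  show "Fr f \<nu> = f \<nu>"
  proof (cases "\<nu> \<in> lo")
    case True
    then have nc: "\<nu> \<notin> cr" using dj1 by blast
    obtain \<tau> where \<tau>: "V \<nu> = {\<tau>}" "\<tau> \<in> up" "\<nu> \<in> d \<tau>" using Vlo True by blast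
    have "lin f (d \<tau>) = {}" using isrefD5[OF r \<tau>(2)] .
    moreover have "lin f (d \<tau>) = sdiff (f \<nu>) (lin f (d \<tau> - {\<nu>}))"
      using lin_remove[OF fin_d \<tau>(3)] .
    ultimately have "f \<nu> = lin f (d \<tau> - {\<nu>})" by (simp only: sdiff_eq_empty)
    moreover have "Fr f \<nu> = lin f (d \<tau> - {\<nu>})" using True nc \<tau>(1) unfolding Fr_def by simp
    ultimately show ?thesis by simp
  next
    case False
    consider "\<nu> \<in> cr" | "\<nu> \<in> up" "\<nu> \<notin> cr" | "\<nu> \<notin> C" "\<nu> \<notin> cr" using cover False dj2 by blast
    then show ?thesis
    proof cases
      case 1 then show ?thesis using isrefD3[OF r] unfolding Fr_def by simp
    next
      case 2 then show ?thesis using isrefD4[OF r] False unfolding Fr_def by simp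
    next
      case 3 then show ?thesis using isrefD1[OF r] False unfolding Fr_def by simp
    qed
  qed
qed

lemma ref_ex1: "\<exists>!f. isref C cr up d dm f"
proof -
  define R0 where "R0 = (Fr ^^ Suc N) (\<lambda>_. {})"
  have fix0: "Fr R0 = R0"
  proof
    fix \<nu>
    show "Fr R0 \<nu> = R0 \<nu>"
    proof (cases "\<nu> \<in> C")
      case True
      have "Fr R0 = (Fr ^^ Suc N) (Fr (\<lambda>_. {}))" unfolding R0_def
        by (metis funpow_Suc_right comp_apply funpow_swap1)
      then show ?thesis using Fr_iter[OF True, of "Suc N" "Fr (\<lambda>_. {})" "\<lambda>_. {}"] tN[OF True]
        unfolding R0_def by simp
    next
      case False
      then show ?thesis unfolding R0_def by (simp add: Fr_out)
    qed
  qed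
  have q: "Q ((Fr ^^ n) (\<lambda>_. {}))" for n
  proof (induction n)
    case 0 then show ?case by (simp add: Q_def)
  next
    case (Suc n) then show ?case using Q_Fr by simp
  qed
  have "isref C cr up d dm R0"
    unfolding isref_def
  proof (intro conjI allI ballI impI)
    fix \<nu> assume "\<nu> \<notin> C" then show "R0 \<nu> = {}" using fix0 Fr_out by metis
  next
    fix \<nu> assume "\<nu> \<in> C" then show "R0 \<nu> \<subseteq> cr \<inter> {x \<in> C. dm x = dm \<nu>}"
      using q[of "Suc N"] unfolding R0_def Q_def by (rule_tac bspec)
  next
    fix \<nu> assume "\<nu> \<in> cr"
    have "R0 \<nu> = Fr R0 \<nu>" using fix0 by simp
    then show "R0 \<nu> = {\<nu>}" using \<open>\<nu> \<in> cr\<close> unfolding Fr_def by simp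
  next
    fix \<tau> assume "\<tau> \<in> up"
    then have "\<tau> \<notin> cr" "\<tau> \<notin> lo" using dj2 dj3 by blast+
    have "R0 \<tau> = Fr R0 \<tau>" using fix0 by simp
    then show "R0 \<tau> = {}" using \<open>\<tau> \<notin> cr\<close> \<open>\<tau> \<notin> lo\<close> unfolding Fr_def by simp
  next
    fix \<tau> assume "\<tau> \<in> up"
    then obtain \<sigma> where "\<tau> \<in> V \<sigma>" using Vsur by blast
    then have "\<sigma> \<in> lo" using lo_of_V by blast
    then obtain \<tau>' where "V \<sigma> = {\<tau>'}" "\<sigma> \<in> d \<tau>'" using Vlo by blast
    then have \<sigma>: "V \<sigma> = {\<tau>}" "\<sigma> \<in> d \<tau>" using \<open>\<tau> \<in> V \<sigma>\<close> by auto
    have nc: "\<sigma> \<notin> cr" using dj1 \<open>\<sigma> \<in> lo\<close> by blast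
    have "R0 \<sigma> = Fr R0 \<sigma>" using fix0 by simp
    also have "\<dots> = lin R0 (d \<tau> - {\<sigma>})" using \<sigma>(1) nc \<open>\<sigma> \<in> lo\<close> unfolding Fr_def by simp
    finally have e: "R0 \<sigma> = lin R0 (d \<tau> - {\<sigma>})" .
    have "lin R0 (d \<tau>) = sdiff (R0 \<sigma>) (lin R0 (d \<tau> - {\<sigma>}))"
      using lin_remove[OF fin_d \<sigma>(2)] .
    then show "lin R0 (d \<tau>) = {}" using e by simp
  qed
  moreover have "isref C cr up d dm f \<Longrightarrow> f = R0" for f
    using Fr_fix_unique[OF isref_Fr fix0] by blast
  ultimately show ?thesis by blast
qed

end

lemma sdiff_sub: "sdiff A B \<subseteq> A \<union> B" by (auto simp: sdiff_def)
lemma sdiff_C2: "A \<subseteq> X \<Longrightarrow> B \<subseteq> X \<Longrightarrow> sdiff A B \<subseteq> X" by (auto simp: sdiff_def)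

context mg begin

definition phi :: "'v set \<Rightarrow> 'v set set" where
  "phi \<nu> = sdiff (sdiff {\<nu>} (lin d (V \<nu>))) (lin V (d \<nu>))"

lemma Phi_eq: "gflow d V = lin phi"
  unfolding gflow_def phi_def ..

lemma linV: "lin V c = \<Union> (V ` c)"
  by (rule lin_inj) (use Vinj in blast)

lemma fin_phi[simp]: "finite (phi \<nu>)"
proof -
  have "finite (lin d (V \<nu>))" by (rule finite_lin) simp_all
  moreover have "finite (lin V (d \<nu>))" by (rule finite_lin) simp_all
  ultimately show ?thesis unfolding phi_def by simp
qed

lemma phi_C: "\<nu> \<in> C \<Longrightarrow> phi \<nu> \<subseteq> C"
proof -
  assume "\<nu> \<in> C"
  have "lin d (V \<nu>) \<subseteq> C" using lin_subset[of d "V \<nu>"] dC by blast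
  moreover have "lin V (d \<nu>) \<subseteq> C" using lin_subset[of V "d \<nu>"] VC by blast
  moreover have "{\<nu>} \<subseteq> C" using \<open>\<nu> \<in> C\<close> by simp
  ultimately show ?thesis unfolding phi_def by (intro sdiff_C2)
qed

lemma phi_lo:
  assumes "\<sigma> \<in> lo" "V \<sigma> = {\<tau>}" "\<sigma> \<in> d \<tau>"
  shows "phi \<sigma> = sdiff (d \<tau> - {\<sigma>}) (\<Union>\<rho>\<in>d \<sigma>. V \<rho>)"
proof -
  have "lin d (V \<sigma>) = d \<tau>" using assms(2) by simp
  moreover have "sdiff {\<sigma>} (d \<tau>) = d \<tau> - {\<sigma>}" using assms(3) unfolding sdiff_def by blast
  ultimately show ?thesis unfolding phi_def linV by simp
qed

lemma phi_nlo:
  assumes "\<nu> \<notin> lo"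
  shows "phi \<nu> = sdiff {\<nu>} (\<Union>\<rho>\<in>d \<nu>. V \<rho>)"
  unfolding phi_def linV using Vnl[OF assms] by simp

lemma UV_up: "(\<Union>\<rho>\<in>A. V \<rho>) \<subseteq> up" using Vup by blast

lemma up_self: "\<tau> \<in> up \<Longrightarrow> \<tau> \<in> (\<Union>\<rho>\<in>d \<tau>. V \<rho>)"
proof -
  assume "\<tau> \<in> up"
  then obtain \<sigma> where "\<tau> \<in> V \<sigma>" using Vsur by blast
  then have "\<sigma> \<in> lo" using lo_of_V by blast
  then obtain \<tau>' where "V \<sigma> = {\<tau>'}" "\<sigma> \<in> d \<tau>'" using Vlo by blast
  then show ?thesis using \<open>\<tau> \<in> V \<sigma>\<close> by auto
qed

lemma V_single: "x \<in> V \<rho> \<Longrightarrow> y \<in> V \<rho> \<Longrightarrow> x = y"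
proof -
  assume a: "x \<in> V \<rho>" "y \<in> V \<rho>"
  then have "\<rho> \<in> lo" using lo_of_V by blast
  then obtain \<tau> where "V \<rho> = {\<tau>}" using Vlo by blast
  then show ?thesis using a by simp
qed

lemma sdiff_mem: "x \<in> sdiff A B \<Longrightarrow> x \<in> A \<or> x \<in> B" by (auto simp: sdiff_def)

lemma sdiff_single_mem: "x \<in> sdiff {a} B \<Longrightarrow> a \<in> B \<Longrightarrow> x \<in> B \<and> x \<noteq> a"
  by (auto simp: sdiff_def)

lemma phi_lt:
  assumes "\<nu> \<in> C" "\<nu> \<notin> cr" "x \<in> phi \<nu>"
  shows "t x < t \<nu>"
proof (cases "\<nu> \<in> lo")
  case True
  then obtain \<tau> where \<tau>: "V \<nu> = {\<tau>}" "\<tau> \<in> up" "\<nu> \<in> d \<tau>" using Vlo by blast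
  have "x \<in> sdiff (d \<tau> - {\<nu>}) (\<Union>\<rho>\<in>d \<nu>. V \<rho>)"
    using assms(3) phi_lo[OF True \<tau>(1) \<tau>(3)] by simp
  then have "x \<in> d \<tau> - {\<nu>} \<or> x \<in> (\<Union>\<rho>\<in>d \<nu>. V \<rho>)" by (rule sdiff_mem)
  then show ?thesis
  proof
    assume "x \<in> d \<tau> - {\<nu>}"
    then show ?thesis using partner_earlier[OF True \<tau>(1), of x] by simp
  next
    assume "x \<in> (\<Union>\<rho>\<in>d \<nu>. V \<rho>)"
    then obtain \<rho> where \<rho>: "\<rho> \<in> d \<nu>" "x \<in> V \<rho>" by blast
    have "\<nu> \<notin> up" using True dj3 by blast
    then have "\<nu> \<notin> V \<rho>" using Vup by blast
    then have "t \<rho> < t \<nu>" using tlt[OF assms(1) \<rho>(1)] by simp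
    then show ?thesis using teq[OF \<rho>(2)] by simp
  qed
next
  case False
  then have up: "\<nu> \<in> up" using cover assms(1,2) by blast
  have "x \<in> sdiff {\<nu>} (\<Union>\<rho>\<in>d \<nu>. V \<rho>)" using assms(3) phi_nlo[OF False] by simp
  then have "x \<in> (\<Union>\<rho>\<in>d \<nu>. V \<rho>) \<and> x \<noteq> \<nu>" using up_self[OF up] by (rule sdiff_single_mem)
  then obtain \<rho> where \<rho>: "\<rho> \<in> d \<nu>" "x \<in> V \<rho>" and "x \<noteq> \<nu>" by blast
  have "\<nu> \<notin> V \<rho>" using V_single[OF \<rho>(2)] \<open>x \<noteq> \<nu>\<close> by blast
  then have "t \<rho> < t \<nu>" using tlt[OF assms(1) \<rho>(1)] by simp
  then show ?thesis using teq[OF \<rho>(2)] by simp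
qed

lemma phi_up: "\<nu> \<in> up \<Longrightarrow> phi \<nu> \<subseteq> up"
proof
  fix x assume "\<nu> \<in> up" "x \<in> phi \<nu>"
  then have "\<nu> \<notin> lo" using dj3 by blast
  then have "x \<in> sdiff {\<nu>} (\<Union>\<rho>\<in>d \<nu>. V \<rho>)" using phi_nlo \<open>x \<in> phi \<nu>\<close> by simp
  then have "x \<in> {\<nu>} \<or> x \<in> (\<Union>\<rho>\<in>d \<nu>. V \<rho>)" by (rule sdiff_mem)
  then show "x \<in> up" using UV_up \<open>\<nu> \<in> up\<close> by blast
qed

lemma phi_cr:
  assumes "\<kappa> \<in> cr"
  shows "phi \<kappa> = sdiff {\<kappa>} (\<Union>\<rho>\<in>d \<kappa>. V \<rho>)" "(\<Union>\<rho>\<in>d \<kappa>. V \<rho>) \<subseteq> up"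
    "\<And>x. x \<in> (\<Union>\<rho>\<in>d \<kappa>. V \<rho>) \<Longrightarrow> t x < t \<kappa>"
proof -
  have "\<kappa> \<notin> lo" using dj1 assms by blast
  then show "phi \<kappa> = sdiff {\<kappa>} (\<Union>\<rho>\<in>d \<kappa>. V \<rho>)" by (rule phi_nlo)
  show "(\<Union>\<rho>\<in>d \<kappa>. V \<rho>) \<subseteq> up" by (rule UV_up)
  fix x assume "x \<in> (\<Union>\<rho>\<in>d \<kappa>. V \<rho>)"
  then obtain \<rho> where \<rho>: "\<rho> \<in> d \<kappa>" "x \<in> V \<rho>" by blast
  have "\<kappa> \<notin> up" using assms dj2 by blast
  then have "\<kappa> \<notin> V \<rho>" using Vup by blast
  moreover have "\<kappa> \<in> C" using crC assms by blast
  ultimately have "t \<rho> < t \<kappa>" using tlt[OF _ \<rho>(1)] by blast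
  then show "t x < t \<kappa>" using teq[OF \<rho>(2)] by simp
qed

abbreviation Phi where "Phi \<equiv> gflow d V"

lemma Phi_C: "c \<subseteq> C \<Longrightarrow> Phi c \<subseteq> C"
proof -
  assume a: "c \<subseteq> C"
  have "Phi c \<subseteq> \<Union> (phi ` c)" unfolding Phi_eq by (rule lin_subset)
  also have "\<dots> \<subseteq> C"
  proof (rule UN_least)
    fix x assume "x \<in> c" then show "phi x \<subseteq> C" using a phi_C by blast
  qed
  finally show ?thesis .
qed

lemma finsub: "c \<subseteq> C \<Longrightarrow> finite c" using finC by (rule finite_subset[rotated])

lemma Phi_empty[simp]: "Phi {} = {}" unfolding Phi_eq by simp

lemma Phi_single: "Phi {\<nu>} = phi \<nu>" unfolding Phi_eq by simp

lemma Phi_sdiff: "a \<subseteq> C \<Longrightarrow> b \<subseteq> C \<Longrightarrow> Phi (sdiff a b) = sdiff (Phi a) (Phi b)"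
  unfolding Phi_eq by (intro lin_sdiff finsub)

lemma PhiN_C: "c \<subseteq> C \<Longrightarrow> (Phi ^^ n) c \<subseteq> C"
proof (induction n)
  case 0 then show ?case by simp
next
  case (Suc n) then show ?case using Phi_C by simp
qed

lemma sdiff_C: "a \<subseteq> C \<Longrightarrow> b \<subseteq> C \<Longrightarrow> sdiff a b \<subseteq> C"
  by (rule sdiff_C2)

lemma PhiN_sdiff:
  assumes a: "a \<subseteq> C" and b: "b \<subseteq> C"
  shows "(Phi ^^ n) (sdiff a b) = sdiff ((Phi ^^ n) a) ((Phi ^^ n) b)"
proof (induction n)
  case 0 then show ?case by simp
next
  case (Suc n) then show ?case using Phi_sdiff[OF PhiN_C[OF a] PhiN_C[OF b], of n n] by simp
qed

lemma Phi_decomp: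
  assumes "finite c"
  shows "Phi c = sdiff (sdiff c (lin d (lin V c))) (lin V (lin d c))"
proof -
  have "Phi c = lin (\<lambda>\<nu>. sdiff (sdiff {\<nu>} (lin d (V \<nu>))) (lin V (d \<nu>))) c"
    unfolding gflow_def ..
  also have "\<dots> = sdiff (lin (\<lambda>\<nu>. sdiff {\<nu>} (lin d (V \<nu>))) c) (lin (\<lambda>\<nu>. lin V (d \<nu>)) c)"
    by (rule lin_pointwise[OF assms])
  also have "lin (\<lambda>\<nu>. sdiff {\<nu>} (lin d (V \<nu>))) c = sdiff (lin (\<lambda>\<nu>. {\<nu>}) c) (lin (\<lambda>\<nu>. lin d (V \<nu>)) c)"
    by (rule lin_pointwise[OF assms])
  also have "lin (\<lambda>\<nu>. {\<nu>}) c = c" by (rule lin_id[OF assms])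
  also have "lin (\<lambda>\<nu>. lin d (V \<nu>)) c = lin d (lin V c)"
    using lin_comp[OF assms fin_V, of d] by simp
  also have "lin (\<lambda>\<nu>. lin V (d \<nu>)) c = lin V (lin d c)"
    using lin_comp[OF assms fin_d, of V] by simp
  finally show ?thesis .
qed

end

context mg begin

definition stab :: "'v set set \<Rightarrow> bool" where
  "stab a \<longleftrightarrow> (\<exists>n. (Phi ^^ Suc n) a = (Phi ^^ n) a)"

lemma stab_ge:
  assumes "(Phi ^^ Suc n) a = (Phi ^^ n) a" "n \<le> m"
  shows "(Phi ^^ m) a = (Phi ^^ n) a"
  using assms(2)
proof (induction m rule: dec_induct)
  case base then show ?case by simp
next
  case (step m)
  have "(Phi ^^ Suc m) a = Phi ((Phi ^^ m) a)" by simp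
  also have "\<dots> = Phi ((Phi ^^ n) a)" using step by simp
  also have "\<dots> = (Phi ^^ n) a" using assms(1) by simp
  finally show ?case .
qed

lemma stab_sdiff:
  assumes "a \<subseteq> C" "b \<subseteq> C" "stab a" "stab b"
  shows "stab (sdiff a b)"
proof -
  obtain na where na: "(Phi ^^ Suc na) a = (Phi ^^ na) a" using assms(3) stab_def by blast
  obtain nb where nb: "(Phi ^^ Suc nb) b = (Phi ^^ nb) b" using assms(4) stab_def by blast
  define n where "n = max na nb"
  have "(Phi ^^ Suc n) a = (Phi ^^ n) a"
    using stab_ge[OF na, of n] stab_ge[OF na, of "Suc n"] unfolding n_def by simp
  moreover have "(Phi ^^ Suc n) b = (Phi ^^ n) b"
    using stab_ge[OF nb, of n] stab_ge[OF nb, of "Suc n"] unfolding n_def by simp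
  ultimately have "(Phi ^^ Suc n) (sdiff a b) = (Phi ^^ n) (sdiff a b)"
    using PhiN_sdiff[OF assms(1,2), of n] PhiN_sdiff[OF assms(1,2), of "Suc n"] by simp
  then show ?thesis unfolding stab_def by blast
qed

lemma stab_empty: "stab {}"
proof -
  have "(Phi ^^ Suc 0) {} = (Phi ^^ 0) {}" by simp
  then show ?thesis unfolding stab_def by blast
qed

lemma stab_fin:
  assumes "c \<subseteq> C" "\<And>\<nu>. \<nu> \<in> c \<Longrightarrow> stab {\<nu>}"
  shows "stab c"
proof -
  have "finite c" using assms(1) by (rule finsub)
  then show ?thesis using assms
  proof (induction c rule: finite_induct)
    case empty show ?case by (rule stab_empty)
  next
    case (insert x F)
    have e: "insert x F = sdiff {x} F" using insert(2) by (auto simp: sdiff_def)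
    have "stab F" using insert by simp
    moreover have "stab {x}" using insert by simp
    moreover have "{x} \<subseteq> C" "F \<subseteq> C" using insert by auto
    ultimately show ?case unfolding e using stab_sdiff by blast
  qed
qed

lemma nil_up: "u \<subseteq> up \<Longrightarrow> (\<forall>x\<in>u. t x < k) \<Longrightarrow> (Phi ^^ k) u = {}"
proof (induction k arbitrary: u)
  case 0 then show ?case by simp
next
  case (Suc k)
  have "Phi u \<subseteq> \<Union> (phi ` u)" unfolding Phi_eq by (rule lin_subset)
  have "Phi u \<subseteq> up \<and> (\<forall>x\<in>Phi u. t x < k)"
  proof (intro conjI ballI subsetI)
    fix x assume "x \<in> Phi u"
    then obtain \<mu> where \<mu>: "\<mu> \<in> u" "x \<in> phi \<mu>" using \<open>Phi u \<subseteq> \<Union> (phi ` u)\<close> by blast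
    have "\<mu> \<in> up" using \<mu> Suc.prems by blast
    then show "x \<in> up" using phi_up \<mu> by blast
    have "\<mu> \<in> C" "\<mu> \<notin> cr" using \<open>\<mu> \<in> up\<close> upC dj2 by blast+
    then have "t x < t \<mu>" using phi_lt \<mu> by blast
    moreover have "t \<mu> < Suc k" using Suc.prems \<mu> by blast
    ultimately show "t x < k" by simp
  qed
  then have "(Phi ^^ k) (Phi u) = {}" using Suc.IH by blast
  then show ?case by (simp add: funpow_Suc_right del: funpow.simps)
qed

lemma stab_cell: "\<nu> \<in> C \<Longrightarrow> stab {\<nu>}"
proof (induction "t \<nu>" arbitrary: \<nu> rule: less_induct)
  case less
  show ?case
  proof (cases "\<nu> \<in> cr")
    case True
    let ?U = "\<Union>\<rho>\<in>d \<nu>. V \<rho>"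
    have U: "?U \<subseteq> up" "\<forall>x\<in>?U. t x < t \<nu>" using phi_cr[OF True] by blast+
    have UC: "?U \<subseteq> C" using U upC by blast
    have "(Phi ^^ t \<nu>) ?U = {}" using nil_up U by blast
    have "(Phi ^^ Suc (t \<nu>)) {\<nu>} = (Phi ^^ t \<nu>) (Phi {\<nu>})"
      by (simp add: funpow_Suc_right del: funpow.simps)
    also have "\<dots> = (Phi ^^ t \<nu>) (sdiff {\<nu>} ?U)" using Phi_single phi_cr[OF True] by simp
    also have "\<dots> = sdiff ((Phi ^^ t \<nu>) {\<nu>}) ((Phi ^^ t \<nu>) ?U)"
      using PhiN_sdiff[OF _ UC] less.prems by simp
    also have "\<dots> = (Phi ^^ t \<nu>) {\<nu>}" using \<open>(Phi ^^ t \<nu>) ?U = {}\<close> by simp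
    finally show ?thesis unfolding stab_def by blast
  next
    case False
    have "stab (phi \<nu>)"
    proof (rule stab_fin)
      show "phi \<nu> \<subseteq> C" using phi_C less.prems by blast
      fix x assume "x \<in> phi \<nu>"
      then have "t x < t \<nu>" "x \<in> C" using phi_lt[OF less.prems False] phi_C[OF less.prems] by blast+
      then show "stab {x}" using less.hyps by blast
    qed
    then obtain n where n: "(Phi ^^ Suc n) (phi \<nu>) = (Phi ^^ n) (phi \<nu>)" unfolding stab_def by blast
    have "(Phi ^^ Suc (Suc n)) {\<nu>} = (Phi ^^ Suc n) (Phi {\<nu>})"
      by (simp only: funpow_Suc_right comp_apply)
    also have "\<dots> = (Phi ^^ n) (Phi {\<nu>})" using n Phi_single by simp
    also have "\<dots> = (Phi ^^ Suc n) {\<nu>}" by (simp only: funpow_Suc_right comp_apply)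
    finally show ?thesis unfolding stab_def by blast
  qed
qed

lemma stab_all: "c \<subseteq> C \<Longrightarrow> stab c"
  using stab_fin stab_cell by blast

end

context mg begin

definition R :: "'v set \<Rightarrow> 'v set set" where
  "R = (THE f. isref C cr up d dm f)"

lemma isR: "isref C cr up d dm R"
  unfolding R_def by (rule theI'[OF ref_ex1])

lemma R_up: "\<tau> \<in> up \<Longrightarrow> R \<tau> = {}" using isrefD4[OF isR] .
lemma R_cr: "\<kappa> \<in> cr \<Longrightarrow> R \<kappa> = {\<kappa>}" using isrefD3[OF isR] .
lemma R_bd: "\<tau> \<in> up \<Longrightarrow> lin R (d \<tau>) = {}" using isrefD5[OF isR] .
lemma R_sub: "\<nu> \<in> C \<Longrightarrow> R \<nu> \<subseteq> cr"
proof -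
  assume "\<nu> \<in> C"
  then have "R \<nu> \<subseteq> cr \<inter> {x\<in>C. dm x = dm \<nu>}" by (rule isrefD2[OF isR])
  then show ?thesis using Int_lower1 by (rule subset_trans)
qed
lemma R_out: "\<nu> \<notin> C \<Longrightarrow> R \<nu> = {}" using isrefD1[OF isR] .
lemma R_sub': "R \<nu> \<subseteq> cr"
proof (cases "\<nu> \<in> C")
  case True then show ?thesis by (rule R_sub)
next
  case False then show ?thesis using R_out by simp
qed

lemma fin_R[simp]: "finite (R \<nu>)"
proof -
  have "R \<nu> \<subseteq> C" using R_sub' crC by (rule subset_trans)
  then show ?thesis by (rule finsub)
qed

lemma R_phi: "lin R (phi \<nu>) = R \<nu>"
proof -
  have f1: "finite (lin d (V \<nu>))" by (rule finite_lin) simp_all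
  have f2: "finite (lin V (d \<nu>))" by (rule finite_lin) simp_all
  have "lin R (phi \<nu>) = sdiff (sdiff (R \<nu>) (lin R (lin d (V \<nu>)))) (lin R (lin V (d \<nu>)))"
    unfolding phi_def using f1 f2 by (simp add: lin_sdiff)
  moreover have "lin R (lin d (V \<nu>)) = {}"
  proof -
    have "lin R (lin d (V \<nu>)) = lin (\<lambda>\<tau>. lin R (d \<tau>)) (V \<nu>)" by (rule lin_comp) simp_all
    also have "\<dots> = {}" by (rule lin_zero) (use Vup R_bd in blast)
    finally show ?thesis .
  qed
  moreover have "lin R (lin V (d \<nu>)) = {}"
  proof -
    have "lin R (lin V (d \<nu>)) = lin (\<lambda>\<rho>. lin R (V \<rho>)) (d \<nu>)" by (rule lin_comp) simp_all
    also have "\<dots> = {}"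
    proof (rule lin_zero)
      fix \<rho> show "lin R (V \<rho>) = {}" by (rule lin_zero) (use Vup R_up in blast)
    qed
    finally show ?thesis .
  qed
  ultimately show ?thesis by simp
qed

lemma R_Phi: "c \<subseteq> C \<Longrightarrow> lin R (Phi c) = lin R c"
proof -
  assume "c \<subseteq> C"
  then have "finite c" by (rule finsub)
  have "lin R (Phi c) = lin (\<lambda>\<nu>. lin R (phi \<nu>)) c" unfolding Phi_eq
    by (rule lin_comp[OF \<open>finite c\<close>]) simp
  also have "\<dots> = lin R c" by (rule lin_cong) (rule R_phi)
  finally show ?thesis .
qed

lemma R_PhiN: "c \<subseteq> C \<Longrightarrow> lin R ((Phi ^^ n) c) = lin R c"
proof (induction n)
  case 0 then show ?case by simp
next
  case (Suc n) then show ?case using R_Phi[OF PhiN_C[OF Suc.prems, of n]] by simp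
qed

lemma fix_nolo:
  assumes "x \<subseteq> C" "Phi x = x"
  shows "x \<inter> lo = {}"
proof (rule ccontr)
  assume ne: "x \<inter> lo \<noteq> {}"
  have fin: "finite (x \<inter> lo)" using assms(1) finsub by blast
  define m where "m = Max (t ` (x \<inter> lo))"
  have "m \<in> t ` (x \<inter> lo)" unfolding m_def using fin ne by (intro Max_in) auto
  then obtain \<sigma> where \<sigma>: "\<sigma> \<in> x" "\<sigma> \<in> lo" "t \<sigma> = m" by blast
  have mx: "\<And>\<sigma>'. \<sigma>' \<in> x \<Longrightarrow> \<sigma>' \<in> lo \<Longrightarrow> t \<sigma>' \<le> t \<sigma>"
    unfolding \<sigma>(3) m_def using fin by (intro Max_ge) auto
  obtain \<tau> where \<tau>: "V \<sigma> = {\<tau>}" "\<tau> \<in> up" "\<sigma> \<in> d \<tau>" using Vlo \<sigma>(2) by blast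
  have finx: "finite x" using assms(1) by (rule finsub)
  have Vx: "lin V x = \<Union> (V ` x)" by (rule linV)
  have S: "{\<tau>'\<in>lin V x. \<sigma> \<in> d \<tau>'} = {\<tau>}"
  proof (rule set_eqI, rule iffI)
    fix \<tau>' assume "\<tau>' \<in> {\<tau>'\<in>lin V x. \<sigma> \<in> d \<tau>'}"
    then obtain \<sigma>' where \<sigma>': "\<sigma>' \<in> x" "\<tau>' \<in> V \<sigma>'" "\<sigma> \<in> d \<tau>'" unfolding Vx by blast
    have "\<tau>' \<in> C" using \<sigma>'(2) VC by blast
    have "\<sigma>' \<in> lo" using \<sigma>'(2) lo_of_V by blast
    have "t \<sigma>' \<le> t \<sigma>" using mx \<sigma>' \<open>\<sigma>' \<in> lo\<close> by blast
    moreover have "t \<tau>' = t \<sigma>'" using teq \<sigma>'(2) by blast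
    ultimately have "\<not> t \<sigma> < t \<tau>'" by simp
    then have "\<tau>' \<in> V \<sigma>" using tlt[OF \<open>\<tau>' \<in> C\<close> \<sigma>'(3)] by blast
    then show "\<tau>' \<in> {\<tau>}" using \<tau>(1) by simp
  next
    fix \<tau>' assume "\<tau>' \<in> {\<tau>}"
    then show "\<tau>' \<in> {\<tau>'\<in>lin V x. \<sigma> \<in> d \<tau>'}" unfolding Vx using \<sigma>(1) \<tau> by auto
  qed
  have L: "\<sigma> \<in> lin d (lin V x) \<longleftrightarrow> odd (card {\<tau>'\<in>lin V x. \<sigma> \<in> d \<tau>'})" by (rule lin_mem)
  have inA: "\<sigma> \<in> lin d (lin V x)" using L unfolding S by simp
  have notB: "\<sigma> \<notin> lin V (lin d x)"
  proof
    assume "\<sigma> \<in> lin V (lin d x)"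
    then have "\<sigma> \<in> \<Union> (V ` lin d x)" using lin_subset by blast
    then have "\<sigma> \<in> up" using Vup by blast
    then show False using \<sigma>(2) dj3 by blast
  qed
  have "\<sigma> \<notin> Phi x" unfolding Phi_decomp[OF finx] using \<sigma>(1) inA notB by (simp add: sdiff_def)
  then show False using assms(2) \<sigma>(1) by simp
qed

lemma fix_R:
  assumes "x \<subseteq> C" "Phi x = x"
  shows "lin R x = x \<inter> cr"
proof -
  have nl: "x \<inter> lo = {}" using fix_nolo[OF assms] .
  have Rx: "\<And>\<mu>. \<mu> \<in> x \<Longrightarrow> R \<mu> = (if \<mu> \<in> cr then {\<mu>} else {})"
  proof -
    fix \<mu> assume "\<mu> \<in> x"
    show "R \<mu> = (if \<mu> \<in> cr then {\<mu>} else {})"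
    proof (cases "\<mu> \<in> cr")
      case True then show ?thesis using R_cr by simp
    next
      case False
      then have "\<mu> \<in> up" using \<open>\<mu> \<in> x\<close> nl assms(1) cover by blast
      then show ?thesis using R_up False by simp
    qed
  qed
  have "lin R x = lin (\<lambda>\<mu>. if \<mu> \<in> cr then {\<mu>} else {}) x" by (rule lin_cong) (rule Rx)
  also have "\<dots> = x \<inter> cr"
  proof (rule set_eqI)
    fix y
    have "{\<mu>\<in>x. y \<in> (if \<mu> \<in> cr then {\<mu>} else {})} = (if y \<in> x \<inter> cr then {y} else {})"
      by auto
    then show "y \<in> lin (\<lambda>\<mu>. if \<mu> \<in> cr then {\<mu>} else {}) x \<longleftrightarrow> y \<in> x \<inter> cr"
      unfolding lin_mem by simp
  qed
  finally show ?thesis .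
qed

lemma fix_zero:
  assumes "z \<subseteq> C" "Phi z = z" "z \<inter> cr = {}"
  shows "z = {}"
proof (rule ccontr)
  assume ne: "z \<noteq> {}"
  have fin: "finite z" using assms(1) by (rule finsub)
  define m where "m = Max (t ` z)"
  have "m \<in> t ` z" unfolding m_def using fin ne by (intro Max_in) auto
  then obtain \<nu> where \<nu>: "\<nu> \<in> z" "t \<nu> = m" by blast
  have mx: "\<And>\<mu>. \<mu> \<in> z \<Longrightarrow> t \<mu> \<le> t \<nu>"
    unfolding \<nu>(2) m_def using fin by (intro Max_ge) auto
  have "\<nu> \<notin> Phi z"
  proof
    assume "\<nu> \<in> Phi z"
    then have "\<nu> \<in> \<Union> (phi ` z)" unfolding Phi_eq using lin_subset by blast
    then obtain \<mu> where \<mu>: "\<mu> \<in> z" "\<nu> \<in> phi \<mu>" by blast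
    have "\<mu> \<in> C" "\<mu> \<notin> cr" using \<mu>(1) assms(1,3) by blast+
    then have "t \<nu> < t \<mu>" using phi_lt \<mu>(2) by blast
    then show False using mx[OF \<mu>(1)] by simp
  qed
  then show False using assms(2) \<nu>(1) by simp
qed

context
  fixes g assumes g: "isref C cr lo d' dm g"
begin

definition E :: "'v set \<Rightarrow> 'v set set" where
  "E \<kappa> = {\<nu>\<in>C. \<kappa> \<in> g \<nu>}"

lemma E_C: "E \<kappa> \<subseteq> C" unfolding E_def by blast

lemma fin_E[simp]: "finite (E \<kappa>)" using E_C finsub by blast

lemma E_nolo: "\<nu> \<in> E \<kappa> \<Longrightarrow> \<nu> \<notin> lo"
  unfolding E_def using isrefD4[OF g] by fastforce

lemma E_cr: "\<kappa> \<in> cr \<Longrightarrow> x \<in> cr \<Longrightarrow> x \<in> E \<kappa> \<longleftrightarrow> x = \<kappa>"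
  unfolding E_def using isrefD3[OF g, of x] crC by auto

lemma E_bd: "\<sigma> \<in> lo \<Longrightarrow> \<sigma> \<notin> lin d (E \<kappa>)"
proof -
  assume lo: "\<sigma> \<in> lo"
  then have "\<sigma> \<in> C" using loC by blast
  have "{\<nu>\<in>E \<kappa>. \<sigma> \<in> d \<nu>} = {\<nu>\<in>d' \<sigma>. \<kappa> \<in> g \<nu>}"
  proof (rule set_eqI, rule iffI)
    fix \<nu> assume "\<nu> \<in> {\<nu>\<in>E \<kappa>. \<sigma> \<in> d \<nu>}"
    then have "\<nu> \<in> C" "\<kappa> \<in> g \<nu>" "\<sigma> \<in> d \<nu>" unfolding E_def by blast+
    then show "\<nu> \<in> {\<nu>\<in>d' \<sigma>. \<kappa> \<in> g \<nu>}" using tr[OF _ \<open>\<sigma> \<in> C\<close>] by blast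
  next
    fix \<nu> assume "\<nu> \<in> {\<nu>\<in>d' \<sigma>. \<kappa> \<in> g \<nu>}"
    then have "\<nu> \<in> C" "\<kappa> \<in> g \<nu>" "\<nu> \<in> d' \<sigma>" using d'C by blast+
    then show "\<nu> \<in> {\<nu>\<in>E \<kappa>. \<sigma> \<in> d \<nu>}" using tr[OF _ \<open>\<sigma> \<in> C\<close>] unfolding E_def by blast
  qed
  moreover have "\<kappa> \<notin> lin g (d' \<sigma>)" using isrefD5[OF g lo] by simp
  ultimately show ?thesis unfolding lin_mem by simp
qed

lemma E_fix: "Phi (E \<kappa>) = E \<kappa>"
proof -
  have "lin V (E \<kappa>) = {}" by (rule lin_zero) (use E_nolo Vnl in blast)
  moreover have "lin V (lin d (E \<kappa>)) = {}" by (rule lin_zero) (use E_bd Vnl in blast)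
  ultimately show ?thesis unfolding Phi_decomp[OF fin_E] by simp
qed

lemma R_E: "\<kappa> \<in> cr \<Longrightarrow> lin R (E \<kappa>) = {\<kappa>}"
proof -
  assume k: "\<kappa> \<in> cr"
  have "\<kappa> \<in> E \<kappa>" using E_cr[OF k k] by simp
  have "lin R (E \<kappa> - {\<kappa>}) = {}"
  proof (rule lin_zero)
    fix x assume x: "x \<in> E \<kappa> - {\<kappa>}"
    then have "x \<in> C" "x \<notin> lo" using E_C E_nolo by blast+
    moreover have "x \<notin> cr" using x E_cr[OF k] by blast
    ultimately have "x \<in> up" using cover by blast
    then show "R x = {}" by (rule R_up)
  qed
  then show ?thesis using lin_remove[OF fin_E \<open>\<kappa> \<in> E \<kappa>\<close>, of R] R_cr[OF k] by simp
qed

lemma EE_cr: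
  assumes "S \<subseteq> cr"
  shows "lin E S \<inter> cr = S"
proof (rule set_eqI)
  fix x
  show "x \<in> lin E S \<inter> cr \<longleftrightarrow> x \<in> S"
  proof (cases "x \<in> cr")
    case True
    have e: "{\<kappa>\<in>S. x \<in> E \<kappa>} = (if x \<in> S then {x} else {})"
      using E_cr[OF _ True] assms by auto
    have L: "x \<in> lin E S \<longleftrightarrow> odd (card {\<kappa>\<in>S. x \<in> E \<kappa>})" by (rule lin_mem)
    show ?thesis using True L unfolding e by (cases "x \<in> S") simp_all
  next
    case False then show ?thesis using assms by blast
  qed
qed

lemma EE_C: "lin E S \<subseteq> C" using lin_subset[of E S] E_C by blast

lemma EE_fix:
  assumes "finite S"
  shows "Phi (lin E S) = lin E S"
proof -
  have "Phi (lin E S) = lin (\<lambda>\<kappa>. Phi (E \<kappa>)) S" unfolding Phi_eq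
    by (rule lin_comp[OF assms]) simp
  also have "\<dots> = lin E S" by (rule lin_cong) (rule E_fix)
  finally show ?thesis .
qed

theorem main:
  assumes "c \<subseteq> C"
  shows "(Phi ^^ (LEAST i. (Phi ^^ Suc i) c = (Phi ^^ i) c)) c = lin E (lin R c)"
proof -
  have "\<exists>i. (Phi ^^ Suc i) c = (Phi ^^ i) c" using stab_all[OF assms] unfolding stab_def .
  then have "(Phi ^^ Suc (LEAST i. (Phi ^^ Suc i) c = (Phi ^^ i) c)) c = (Phi ^^ (LEAST i. (Phi ^^ Suc i) c = (Phi ^^ i) c)) c"
    by (rule LeastI_ex)
  moreover define x where "x = (Phi ^^ (LEAST i. (Phi ^^ Suc i) c = (Phi ^^ i) c)) c"
  ultimately have fx: "Phi x = x" by simp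
  have xC: "x \<subseteq> C" unfolding x_def using PhiN_C[OF assms] .
  define S where "S = lin R c"
  have SC: "S \<subseteq> cr" unfolding S_def using lin_subset[of R c] R_sub' by blast
  have finS: "finite S" using SC crC finsub by blast
  define y where "y = lin E S"
  have yC: "y \<subseteq> C" unfolding y_def by (rule EE_C)
  have fy: "Phi y = y" unfolding y_def by (rule EE_fix[OF finS])
  have xcr: "x \<inter> cr = S" using fix_R[OF xC fx] R_PhiN[OF assms] unfolding x_def S_def by simp
  have ycr: "y \<inter> cr = S" unfolding y_def by (rule EE_cr[OF SC])
  define z where "z = sdiff x y"
  have zC: "z \<subseteq> C" unfolding z_def by (rule sdiff_C[OF xC yC])
  have fz: "Phi z = z" unfolding z_def using Phi_sdiff[OF xC yC] fx fy by simp
  have "z \<inter> cr = {}" unfolding z_def using xcr ycr by (auto simp: sdiff_def)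
  then have "z = {}" using fix_zero[OF zC fz] by simp
  then have "x = y" unfolding z_def by (simp add: sdiff_eq_empty)
  then show ?thesis unfolding x_def y_def S_def .
qed

end

end

context mg begin

lemma main':
  assumes "isref C cr lo d' dm g" "c \<subseteq> C"
  shows "(gflow d V ^^ (LEAST i. (gflow d V ^^ Suc i) c = (gflow d V ^^ i) c)) c
     = lin (\<lambda>\<kappa>. {\<nu>\<in>C. \<kappa> \<in> g \<nu>}) (lin (THE f. isref C cr up d dm f) c)"
proof -
  have "(gflow d V ^^ (LEAST i. (gflow d V ^^ Suc i) c = (gflow d V ^^ i) c)) c = lin (E g) (lin R c)"
    by (rule main[OF assms])
  moreover have "E g = (\<lambda>\<kappa>. {\<nu>\<in>C. \<kappa> \<in> g \<nu>})"
  proof (rule ext)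
    fix \<kappa> show "E g \<kappa> = {\<nu>\<in>C. \<kappa> \<in> g \<nu>}" by (rule E_def[OF assms(1)])
  qed
  ultimately show ?thesis unfolding R_def by simp
qed

lemma dual: "mg C cr up lo d' d (\<lambda>\<tau>. {\<sigma>. \<tau> \<in> V \<sigma>}) (\<lambda>\<nu>. N - t \<nu>) dm (Suc N)"
proof
  show "finite C" by (rule finC)
  show "cr \<union> up \<union> lo = C" using cover by blast
  show "cr \<inter> up = {}" by (rule dj2)
  show "cr \<inter> lo = {}" by (rule dj1)
  show "up \<inter> lo = {}" using dj3 by blast
  show "\<And>\<nu>. d' \<nu> \<subseteq> C" by (rule d'C)
  show "\<And>\<nu>. d \<nu> \<subseteq> C" by (rule dC)
  show "\<sigma> \<in> d' \<nu> \<longleftrightarrow> \<nu> \<in> d \<sigma>" if "\<nu> \<in> C" "\<sigma> \<in> C" for \<nu> \<sigma>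
    using tr[OF that(2) that(1)] by (rule sym)
  show "{\<sigma>. \<nu> \<in> V \<sigma>} = {}" if a0: "\<nu> \<notin> up" for \<nu>
  proof -
    have "\<And>\<sigma>. \<nu> \<notin> V \<sigma>" using Vup a0 by blast
    then show ?thesis by simp
  qed
  show "\<exists>\<sigma>. {\<sigma>. \<tau> \<in> V \<sigma>} = {\<sigma>} \<and> \<sigma> \<in> lo \<and> \<tau> \<in> d' \<sigma>" if a: "\<tau> \<in> up" for \<tau>
  proof -
    obtain \<sigma> where s: "\<tau> \<in> V \<sigma>" using Vsur[OF a] by blast
    then have "\<sigma> \<in> lo" by (rule lo_of_V)
    then obtain \<tau>' where "V \<sigma> = {\<tau>'}" "\<sigma> \<in> d \<tau>'" using Vlo by blast
    then have st: "\<sigma> \<in> d \<tau>" using s by simp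
    have tC: "\<tau> \<in> C" using a upC by blast
    have sC: "\<sigma> \<in> C" using \<open>\<sigma> \<in> lo\<close> loC by blast
    have "\<tau> \<in> d' \<sigma>" using tr[OF tC sC] st by simp
    moreover have "{\<sigma>. \<tau> \<in> V \<sigma>} = {\<sigma>}"
    proof (rule set_eqI)
      fix x show "x \<in> {\<sigma>. \<tau> \<in> V \<sigma>} \<longleftrightarrow> x \<in> {\<sigma>}" using Vinj[OF _ s, of x] s by auto
    qed
    ultimately show ?thesis using \<open>\<sigma> \<in> lo\<close> by (intro exI[of _ \<sigma>] conjI)
  qed
  show "a = b" if "x \<in> {\<sigma>. a \<in> V \<sigma>}" "x \<in> {\<sigma>. b \<in> V \<sigma>}" for a b x
  proof (rule V_single[of a x b])
    show "a \<in> V x" using that(1) by simp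
    show "b \<in> V x" using that(2) by simp
  qed
  show "\<exists>\<sigma>. \<tau> \<in> {\<sigma>'. \<sigma> \<in> V \<sigma>'}" if b: "\<tau> \<in> lo" for \<tau>
  proof -
    obtain \<tau>' where "V \<tau> = {\<tau>'}" using Vlo[OF b] by blast
    then have "\<tau> \<in> {\<sigma>'. \<tau>' \<in> V \<sigma>'}" by simp
    then show ?thesis by (rule exI)
  qed
  show "N - t \<rho> < N - t \<nu> \<or> \<nu> \<in> {\<sigma>. \<rho> \<in> V \<sigma>}" if "\<nu> \<in> C" "\<rho> \<in> d' \<nu>" for \<nu> \<rho>
  proof -
    have "\<rho> \<in> C" using that(2) d'C by blast
    then have "\<nu> \<in> d \<rho>" using tr[OF \<open>\<rho> \<in> C\<close> that(1)] that(2) by simp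
    then have "t \<nu> < t \<rho> \<or> \<rho> \<in> V \<nu>" using tlt[OF \<open>\<rho> \<in> C\<close>] by simp
    moreover have "t \<rho> < N" using tN[OF \<open>\<rho> \<in> C\<close>] .
    ultimately show ?thesis by auto
  qed
  show "N - t x = N - t \<sigma>" if "x \<in> {\<sigma>'. \<sigma> \<in> V \<sigma>'}" for \<sigma> x
    using teq[of \<sigma> x] that by simp
  show "\<And>\<nu>. \<nu> \<in> C \<Longrightarrow> N - t \<nu> < Suc N" by simp
  show "\<And>\<nu> \<rho> \<rho>'. \<rho> \<in> d' \<nu> \<Longrightarrow> \<rho>' \<in> d' \<nu> \<Longrightarrow> dm \<rho> = dm \<rho>'" by (rule dmd')
  show "\<And>\<nu> \<rho> \<rho>'. \<rho> \<in> d \<nu> \<Longrightarrow> \<rho>' \<in> d \<nu> \<Longrightarrow> dm \<rho> = dm \<rho>'" by (rule dmd)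
qed

end

context
  fixes K :: "'v set set" and W :: "'v step list"
  assumes ms: "morse_sequence K W"
begin

lemma ms_sc: "i \<le> length W \<Longrightarrow> simplicial_complex (prefix_complex W i)"
  using ms unfolding morse_sequence_def by blast

lemma ms_K: "prefix_complex W (length W) = K"
  using ms unfolding morse_sequence_def by blast

lemma ms_step: "i < length W \<Longrightarrow> (case W ! i of
        Fill \<nu> \<Rightarrow> \<nu> \<notin> prefix_complex W i \<and> facet (prefix_complex W (Suc i)) \<nu>
      | Expand \<sigma> \<tau> \<Rightarrow> \<sigma> \<notin> prefix_complex W i \<and> \<tau> \<notin> prefix_complex W i \<and>
                        free_pair (prefix_complex W (Suc i)) \<sigma> \<tau>)"
  using ms unfolding morse_sequence_def by blast

lemma scK: "simplicial_complex K" using ms_sc[of "length W"] ms_K by simp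

lemma finK: "finite K" using scK unfolding simplicial_complex_def by blast

lemma K_ne: "\<nu> \<in> K \<Longrightarrow> \<nu> \<noteq> {} \<and> finite \<nu>" using scK unfolding simplicial_complex_def by blast

lemma pc_mem: "\<nu> \<in> prefix_complex W k \<longleftrightarrow> (\<exists>i. i < k \<and> i < length W \<and> \<nu> \<in> added (W ! i))"
proof -
  have "\<nu> \<in> prefix_complex W k \<longleftrightarrow> (\<exists>s\<in>set (take k W). \<nu> \<in> added s)"
    unfolding prefix_complex_def by blast
  also have "\<dots> \<longleftrightarrow> (\<exists>i<length (take k W). \<nu> \<in> added (take k W ! i))"
    by (metis in_set_conv_nth)
  also have "\<dots> \<longleftrightarrow> (\<exists>i. i < k \<and> i < length W \<and> \<nu> \<in> added (W ! i))"
    by auto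
  finally show ?thesis .
qed

lemma K_mem: "\<nu> \<in> K \<longleftrightarrow> (\<exists>i<length W. \<nu> \<in> added (W ! i))"
  using pc_mem[of \<nu> "length W"] ms_K by simp

lemma added_pc: "i < length W \<Longrightarrow> \<nu> \<in> added (W ! i) \<Longrightarrow> \<nu> \<in> prefix_complex W (Suc i)"
  using pc_mem by blast

lemma added_K: "i < length W \<Longrightarrow> \<nu> \<in> added (W ! i) \<Longrightarrow> \<nu> \<in> K"
  using K_mem by blast

lemma added_not_pc: "i < length W \<Longrightarrow> \<nu> \<in> added (W ! i) \<Longrightarrow> \<nu> \<notin> prefix_complex W i"
  using ms_step[of i] by (cases "W ! i") auto

lemma uniq: "i < length W \<Longrightarrow> j < length W \<Longrightarrow> \<nu> \<in> added (W ! i) \<Longrightarrow> \<nu> \<in> added (W ! j) \<Longrightarrow> i = j"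
proof (rule ccontr)
  assume a: "i < length W" "j < length W" "\<nu> \<in> added (W ! i)" "\<nu> \<in> added (W ! j)" "i \<noteq> j"
  show False
  proof (cases "i < j")
    case True
    then have "\<nu> \<in> prefix_complex W j" using pc_mem a by blast
    then show False using added_not_pc[OF a(2,4)] by blast
  next
    case False
    then have "j < i" using a(5) by simp
    then have "\<nu> \<in> prefix_complex W i" using pc_mem a by blast
    then show False using added_not_pc[OF a(1,3)] by blast
  qed
qed

lemma set_nth: "s \<in> set W \<Longrightarrow> \<exists>i<length W. W ! i = s" by (metis in_set_conv_nth)

lemma sc_closed:
  assumes "simplicial_complex P" "\<tau> \<in> P" "\<rho> \<noteq> {}" "\<rho> \<subseteq> \<tau>"
  shows "\<rho> \<in> P"
proof -
  have "\<forall>\<sigma>\<in>P. \<forall>\<tau>. \<tau> \<noteq> {} \<and> \<tau> \<subseteq> \<sigma> \<longrightarrow> \<tau> \<in> P"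
    using assms(1) unfolding simplicial_complex_def by (rule conjunct2[THEN conjunct2])
  then show ?thesis using assms(2-4) by blast
qed

lemma fpD:
  assumes "free_pair P \<sigma> \<tau>"
  shows "\<sigma> \<subset> \<tau>" "\<sigma> \<in> P" "\<tau> \<in> P" "\<And>\<rho>. \<rho> \<in> P \<Longrightarrow> \<sigma> \<subseteq> \<rho> \<Longrightarrow> \<rho> = \<sigma> \<or> \<rho> = \<tau>"
  using assms unfolding free_pair_def by simp_all

lemma exp_facts:
  assumes "i < length W" "W ! i = Expand \<sigma> \<tau>"
  shows "\<sigma> \<subset> \<tau>" "\<sigma> \<in> K" "\<tau> \<in> K" "card \<tau> = card \<sigma> + 1"
proof -
  have fp: "free_pair (prefix_complex W (Suc i)) \<sigma> \<tau>" using ms_step[OF assms(1)] assms(2) by simp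
  then show ss: "\<sigma> \<subset> \<tau>" by (rule fpD(1))
  show "\<sigma> \<in> K" using added_K[OF assms(1)] assms(2) by simp
  show tK: "\<tau> \<in> K" using added_K[OF assms(1)] assms(2) by simp
  have sc: "simplicial_complex (prefix_complex W (Suc i))" using ms_sc assms(1) by simp
  have ft: "finite \<tau>" using K_ne[OF tK] by blast
  have fs: "finite \<sigma>" using ss ft finite_subset by blast
  obtain x where x: "x \<in> \<tau>" "x \<notin> \<sigma>" using ss by blast
  have tP: "\<tau> \<in> prefix_complex W (Suc i)" using fp by (rule fpD(3))
  have i1: "insert x \<sigma> \<noteq> {}" by simp
  have i2: "insert x \<sigma> \<subseteq> \<tau>" using x(1) ss by auto
  have "insert x \<sigma> \<in> prefix_complex W (Suc i)" by (rule sc_closed[OF sc tP i1 i2])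
  then have "insert x \<sigma> = \<sigma> \<or> insert x \<sigma> = \<tau>" by (rule fpD(4)[OF fp]) auto
  moreover have "insert x \<sigma> \<noteq> \<sigma>" using x(2) by auto
  ultimately have "insert x \<sigma> = \<tau>" by simp
  moreover have "card (insert x \<sigma>) = Suc (card \<sigma>)" using fs x(2) by (rule card_insert_disjoint)
  ultimately show "card \<tau> = card \<sigma> + 1" by simp
qed

definition tm :: "'v set \<Rightarrow> nat" where
  "tm \<nu> = (THE i. i < length W \<and> \<nu> \<in> added (W ! i))"

lemma tm_eq: "i < length W \<Longrightarrow> \<nu> \<in> added (W ! i) \<Longrightarrow> tm \<nu> = i"
  unfolding tm_def using uniq by blast

lemma tm_prop: "\<nu> \<in> K \<Longrightarrow> tm \<nu> < length W \<and> \<nu> \<in> added (W ! tm \<nu>)"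
  using K_mem tm_eq by metis

lemma Vmap_eq: "Vstar W = (\<lambda>\<tau>. {\<sigma>. \<tau> \<in> Vmap W \<sigma>})"
  unfolding Vstar_def Vmap_def by simp

lemma is_mg: "mg K (critical W) (lower_regular W) (upper_regular W) (bd K) (cobd K) (Vmap W) tm card (length W)"
proof
  show "finite K" by (rule finK)
  show "critical W \<union> lower_regular W \<union> upper_regular W = K"
  proof (rule set_eqI, rule iffI)
    fix \<nu> assume "\<nu> \<in> critical W \<union> lower_regular W \<union> upper_regular W"
    then obtain s where "s \<in> set W" "\<nu> \<in> added s"
      unfolding critical_def lower_regular_def upper_regular_def by force
    then show "\<nu> \<in> K" using set_nth added_K by metis
  next
    fix \<nu> assume "\<nu> \<in> K"
    then obtain i where i: "i < length W" "\<nu> \<in> added (W ! i)" using K_mem by blast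
    have mem: "W ! i \<in> set W" using i(1) by simp
    show "\<nu> \<in> critical W \<union> lower_regular W \<union> upper_regular W"
    proof (cases "W ! i")
      case (Fill \<kappa>)
      then have "\<nu> = \<kappa>" using i(2) by simp
      then have "Fill \<nu> \<in> set W" using mem Fill by simp
      then show ?thesis unfolding critical_def by simp
    next
      case (Expand \<sigma> \<tau>)
      then have e: "Expand \<sigma> \<tau> \<in> set W" using mem by simp
      have "\<nu> = \<sigma> \<or> \<nu> = \<tau>" using i(2) Expand by simp
      then show ?thesis
      proof
        assume "\<nu> = \<sigma>" then have "\<nu> \<in> lower_regular W" using e unfolding lower_regular_def by blast
        then show ?thesis by simp
      next
        assume "\<nu> = \<tau>" then have "\<nu> \<in> upper_regular W" using e unfolding upper_regular_def by blast
        then show ?thesis by simp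
      qed
    qed
  qed
  show "critical W \<inter> lower_regular W = {}"
  proof (rule ccontr)
    assume "critical W \<inter> lower_regular W \<noteq> {}"
    then obtain \<nu> \<tau> where "Fill \<nu> \<in> set W" "Expand \<nu> \<tau> \<in> set W"
      unfolding critical_def lower_regular_def by blast
    then obtain i j where "i < length W" "W ! i = Fill \<nu>" "j < length W" "W ! j = Expand \<nu> \<tau>"
      using set_nth by metis
    moreover have "i = j" using uniq calculation by (metis added.simps insertI1)
    ultimately show False by simp
  qed
  show "critical W \<inter> upper_regular W = {}"
  proof (rule ccontr)
    assume "critical W \<inter> upper_regular W \<noteq> {}"
    then obtain \<nu> \<sigma> where "Fill \<nu> \<in> set W" "Expand \<sigma> \<nu> \<in> set W"
      unfolding critical_def upper_regular_def by blast
    then obtain i j where "i < length W" "W ! i = Fill \<nu>" "j < length W" "W ! j = Expand \<sigma> \<nu>"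
      using set_nth by metis
    moreover have "i = j" using uniq calculation by (metis added.simps insertI1 insert_commute)
    ultimately show False by simp
  qed
  show "lower_regular W \<inter> upper_regular W = {}"
  proof (rule ccontr)
    assume "lower_regular W \<inter> upper_regular W \<noteq> {}"
    then obtain \<nu> \<sigma> \<tau> where "Expand \<nu> \<tau> \<in> set W" "Expand \<sigma> \<nu> \<in> set W"
      unfolding lower_regular_def upper_regular_def by blast
    then obtain i j where ij: "i < length W" "W ! i = Expand \<nu> \<tau>" "j < length W" "W ! j = Expand \<sigma> \<nu>"
      using set_nth by metis
    moreover have "i = j" using uniq ij by (metis added.simps insertI1 insert_commute)
    ultimately have "\<sigma> = \<nu>" "\<nu> = \<tau>" by simp_all
    then show False using exp_facts(1)[OF ij(3,4)] by simp
  qed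
  show "\<And>\<nu>. bd K \<nu> \<subseteq> K" unfolding bd_def by blast
  show "\<And>\<nu>. cobd K \<nu> \<subseteq> K" unfolding cobd_def by blast
  show "\<sigma> \<in> bd K \<nu> \<longleftrightarrow> \<nu> \<in> cobd K \<sigma>" if "\<nu> \<in> K" "\<sigma> \<in> K" for \<nu> \<sigma>
    using that unfolding bd_def cobd_def by auto
  show "Vmap W \<nu> = {}" if "\<nu> \<notin> lower_regular W" for \<nu>
    using that unfolding Vmap_def lower_regular_def by blast
  show "\<exists>\<tau>. Vmap W \<sigma> = {\<tau>} \<and> \<tau> \<in> upper_regular W \<and> \<sigma> \<in> bd K \<tau>" if a: "\<sigma> \<in> lower_regular W" for \<sigma>
  proof -
    obtain \<tau> where e: "Expand \<sigma> \<tau> \<in> set W" using a unfolding lower_regular_def by blast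
    then obtain i where i: "i < length W" "W ! i = Expand \<sigma> \<tau>" using set_nth by blast
    have "Vmap W \<sigma> = {\<tau>}"
    proof (rule set_eqI, rule iffI)
      fix x assume "x \<in> Vmap W \<sigma>"
      then have "Expand \<sigma> x \<in> set W" unfolding Vmap_def by simp
      then obtain j where j: "j < length W" "W ! j = Expand \<sigma> x" using set_nth by blast
      have "i = j" using uniq[OF i(1) j(1), of \<sigma>] i(2) j(2) by simp
      then show "x \<in> {\<tau>}" using i(2) j(2) by simp
    next
      fix x assume "x \<in> {\<tau>}" then show "x \<in> Vmap W \<sigma>" using e unfolding Vmap_def by simp
    qed
    moreover have "\<tau> \<in> upper_regular W" using e unfolding upper_regular_def by blast
    moreover have "\<sigma> \<in> bd K \<tau>" using exp_facts[OF i] unfolding bd_def by simp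
    ultimately show ?thesis by blast
  qed
  show "a = b" if "x \<in> Vmap W a" "x \<in> Vmap W b" for a b x
  proof -
    have "Expand a x \<in> set W" "Expand b x \<in> set W" using that unfolding Vmap_def by simp_all
    then obtain i j where ij: "i < length W" "W ! i = Expand a x" "j < length W" "W ! j = Expand b x"
      using set_nth by metis
    have "i = j" using uniq[OF ij(1) ij(3), of x] ij(2,4) by simp
    then show ?thesis using ij(2,4) by simp
  qed
  show "\<exists>\<sigma>. \<tau> \<in> Vmap W \<sigma>" if "\<tau> \<in> upper_regular W" for \<tau>
    using that unfolding upper_regular_def Vmap_def by simp
  show "tm \<rho> < tm \<nu> \<or> \<nu> \<in> Vmap W \<rho>" if a: "\<nu> \<in> K" "\<rho> \<in> bd K \<nu>" for \<nu> \<rho>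
  proof -
    define i where "i = tm \<nu>"
    have i: "i < length W" "\<nu> \<in> added (W ! i)" using tm_prop[OF a(1)] unfolding i_def by blast+
    have \<rho>: "\<rho> \<in> K" "\<rho> \<subset> \<nu>" using a(2) unfolding bd_def by blast+
    have "\<rho> \<noteq> {}" using K_ne[OF \<rho>(1)] by blast
    have sc: "simplicial_complex (prefix_complex W (Suc i))" using ms_sc i(1) by simp
    have "\<nu> \<in> prefix_complex W (Suc i)" using added_pc[OF i] .
    moreover have "\<rho> \<subseteq> \<nu>" using \<rho>(2) by blast
    ultimately have "\<rho> \<in> prefix_complex W (Suc i)" using sc_closed[OF sc] \<open>\<rho> \<noteq> {}\<close> by blast
    then obtain j where j: "j < Suc i" "j < length W" "\<rho> \<in> added (W ! j)" using pc_mem by blast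
    have tr: "tm \<rho> = j" using tm_eq[OF j(2,3)] .
    show ?thesis
    proof (cases "j < i")
      case True then show ?thesis using tr i_def by simp
    next
      case False
      then have "j = i" using j(1) by simp
      then have \<rho>i: "\<rho> \<in> added (W ! i)" using j(3) by simp
      show ?thesis
      proof (cases "W ! i")
        case (Fill \<kappa>)
        then have "\<rho> = \<nu>" using \<rho>i i(2) by simp
        then show ?thesis using \<rho>(2) by simp
      next
        case (Expand \<sigma> \<tau>)
        have st: "\<sigma> \<subset> \<tau>" using exp_facts(1)[OF i(1) Expand] .
        have "\<rho> = \<sigma> \<and> \<nu> = \<tau>" using \<rho>i i(2) Expand st \<rho>(2) by auto
        then have "Expand \<rho> \<nu> \<in> set W" using Expand i(1) by (metis nth_mem)
        then show ?thesis unfolding Vmap_def by simp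
      qed
    qed
  qed
  show "tm x = tm \<sigma>" if "x \<in> Vmap W \<sigma>" for \<sigma> x
  proof -
    have "Expand \<sigma> x \<in> set W" using that unfolding Vmap_def by simp
    then obtain i where i: "i < length W" "W ! i = Expand \<sigma> x" using set_nth by blast
    have "tm x = i" by (rule tm_eq) (use i in simp_all)
    moreover have "tm \<sigma> = i" by (rule tm_eq) (use i in simp_all)
    ultimately show ?thesis by simp
  qed
  show "tm \<nu> < length W" if "\<nu> \<in> K" for \<nu> using tm_prop[OF that] by (rule conjunct1)
  show "card \<rho> = card \<rho>'" if "\<rho> \<in> bd K \<nu>" "\<rho>' \<in> bd K \<nu>" for \<nu> \<rho> \<rho>'
  proof -
    have "card \<rho> + 1 = card \<nu>" using that(1) unfolding bd_def by (simp only: mem_Collect_eq)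
    moreover have "card \<rho>' + 1 = card \<nu>" using that(2) unfolding bd_def by (simp only: mem_Collect_eq)
    ultimately show ?thesis by linarith
  qed
  show "card \<rho> = card \<rho>'" if "\<rho> \<in> cobd K \<nu>" "\<rho>' \<in> cobd K \<nu>" for \<nu> \<rho> \<rho>'
  proof -
    have "card \<rho> = card \<nu> + 1" using that(1) unfolding cobd_def by (simp only: mem_Collect_eq)
    moreover have "card \<rho>' = card \<nu> + 1" using that(2) unfolding cobd_def by (simp only: mem_Collect_eq)
    ultimately show ?thesis by linarith
  qed
qed

lemma sd: "\<nu> \<in> K \<Longrightarrow> simplices_dim K (card \<nu> - 1) = {x\<in>K. card x = card \<nu>}"
proof -
  assume "\<nu> \<in> K"
  then have "card \<nu> > 0" using K_ne card_gt_0_iff by blast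
  then have "Suc (card \<nu> - 1) = card \<nu>" by simp
  then show ?thesis unfolding simplices_dim_def by simp
qed

lemma ref_eq: "is_reference_map K W f \<longleftrightarrow> isref K (critical W) (upper_regular W) (bd K) card f"
proof -
  have "(\<forall>\<nu>\<in>K. f \<nu> \<subseteq> critical W \<inter> simplices_dim K (card \<nu> - 1)) \<longleftrightarrow>
        (\<forall>\<nu>\<in>K. f \<nu> \<subseteq> critical W \<inter> {x\<in>K. card x = card \<nu>})"
    using sd by (intro ball_cong) simp_all
  then show ?thesis unfolding is_reference_map_def isref_def by (simp only:)
qed

lemma coref_eq: "is_coreference_map K W f \<longleftrightarrow> isref K (critical W) (lower_regular W) (cobd K) card f"
proof -
  have "(\<forall>\<nu>\<in>K. f \<nu> \<subseteq> critical W \<inter> simplices_dim K (card \<nu> - 1)) \<longleftrightarrow>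
        (\<forall>\<nu>\<in>K. f \<nu> \<subseteq> critical W \<inter> {x\<in>K. card x = card \<nu>})"
    using sd by (intro ball_cong) simp_all
  then show ?thesis unfolding is_coreference_map_def isref_def by (simp only:)
qed

lemma th_aux:
  assumes "c \<subseteq> K"
  shows "flow_bar K W c = lin (ext_reference K W) (lin (reference_map K W) c) \<and>
         coflow_bar K W c = lin (ext_coreference K W) (lin (coreference_map K W) c)"
proof -
  interpret L1: mg K "critical W" "lower_regular W" "upper_regular W" "bd K" "cobd K" "Vmap W" tm card "length W"
    by (rule is_mg)
  interpret L2: mg K "critical W" "upper_regular W" "lower_regular W" "cobd K" "bd K"
    "\<lambda>\<tau>. {\<sigma>. \<tau> \<in> Vmap W \<sigma>}" "\<lambda>\<nu>. length W - tm \<nu>" card "Suc (length W)"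
    by (rule L1.dual)
  have rm: "reference_map K W = (THE f. isref K (critical W) (upper_regular W) (bd K) card f)"
    unfolding reference_map_def ref_eq ..
  have cm: "coreference_map K W = (THE f. isref K (critical W) (lower_regular W) (cobd K) card f)"
    unfolding coreference_map_def coref_eq ..
  have isr: "isref K (critical W) (upper_regular W) (bd K) card (reference_map K W)"
    unfolding rm by (rule theI'[OF L1.ref_ex1])
  have isc: "isref K (critical W) (lower_regular W) (cobd K) card (coreference_map K W)"
    unfolding cm by (rule theI'[OF L2.ref_ex1])
  have fl: "flow K W = gflow (bd K) (Vmap W)" unfolding flow_def gflow_def ..
  have cfl: "coflow K W = gflow (cobd K) (\<lambda>\<tau>. {\<sigma>. \<tau> \<in> Vmap W \<sigma>})"
    unfolding coflow_def gflow_def Vmap_eq ..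
  have er: "ext_reference K W = (\<lambda>\<kappa>. {\<nu>\<in>K. \<kappa> \<in> coreference_map K W \<nu>})"
    unfolding ext_reference_def ..
  have ec: "ext_coreference K W = (\<lambda>\<kappa>. {\<nu>\<in>K. \<kappa> \<in> reference_map K W \<nu>})"
    unfolding ext_coreference_def ..
  have 1: "flow_bar K W c = lin (ext_reference K W) (lin (reference_map K W) c)"
    unfolding flow_bar_def fl er rm by (rule L1.main'[OF isc assms])
  have 2: "coflow_bar K W c = lin (ext_coreference K W) (lin (coreference_map K W) c)"
    unfolding coflow_bar_def cfl ec cm by (rule L2.main'[OF isr assms])
  show ?thesis using 1 2 by (rule conjI)
qed

end

theorem theorem13:
  fixes K :: "'v set set" and W :: "'v step list" and p :: nat
  assumes "morse_sequence K W"
  shows "\<forall>c. c \<subseteq> simplices_dim K p \<longrightarrow>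
           flow_bar K W c = lin (ext_reference K W) (lin (reference_map K W) c) \<and>
           coflow_bar K W c = lin (ext_coreference K W) (lin (coreference_map K W) c)"
proof (intro allI impI)
  fix c assume "c \<subseteq> simplices_dim K p"
  then have "c \<subseteq> K" unfolding simplices_dim_def by blast
  then show "flow_bar K W c = lin (ext_reference K W) (lin (reference_map K W) c) \<and>
           coflow_bar K W c = lin (ext_coreference K W) (lin (coreference_map K W) c)"
    by (rule th_aux[OF assms])
qed

end
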